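(* Let $X$ be a smooth projective split toric variety over $\mathbb{Q}$ with $-K_X$ globally generated, $r=\operatorname{rank}\operatorname{Pic}(X)$. Let $\phi\in\mathbb{Z}[x_\rho:\rho\in\Delta(1)]$ be a non-zero polynomial and $\mathcal{A}_\phi(B)=\{\mathbf{X}\in\mathcal{A}(B):\phi(\mathbf{X})=0\}$. Then, uniformly in $\phi$, $$\#\mathcal{A}_\phi(B)\ll B(\log B)^{r-2}\log\log B+(\deg\phi)\,B(\log B)^{r-2}.$$
   Context: $X$ is defined by a complete regular fan $\Delta$ in $N_\mathbb{R}$ ($N\cong\mathbb{Z}^{\dim X}$, $M$ its dual); $\Delta(1)$ is the set of rays with primitive generators $n_\rho$, $\Delta_{\max}$ the maximal cones. For $\sigma\in\Delta_{\max}$, $m_\sigma\in M$ is the unique element with $\langle m_\sigma,n_\rho\rangle=1$ for all rays $\rho$ of $\sigma$, and $a_\rho(\sigma)=1-\langle m_\sigma,n_\rho\rangle\ge0$. For $\mathbf{X}=(X_\rho)$ with positive entries, $\mathbf{X}^{D_0(\sigma)}=\prod_\rho X_\rho^{a_\rho(\sigma)}$, and $\mathcal{A}(B)=\{\mathbf{X}\in\mathbb{Z}_{\ge1}^{\Delta(1)}:\max_{\sigma\in\Delta_{\max}}\mathbf{X}^{D_0(\sigma)}\le B\}$. *)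

theory Defs
  imports "HOL-Analysis.Analysis"
begin

text \<open>Lattice N = int^'n (dual M identified with int^'n via the standard pairing).\<close>

definition pair :: "int ^ 'n \<Rightarrow> int ^ 'n \<Rightarrow> int" where
  "pair m v = (\<Sum>i\<in>UNIV. m $ i * v $ i)"

definition rvec :: "int ^ 'n \<Rightarrow> real ^ 'n" where
  "rvec v = (\<chi> i. real_of_int (v $ i))"

definition cone_of :: "('r \<Rightarrow> int ^ 'n) \<Rightarrow> 'r set \<Rightarrow> (real ^ 'n) set" where
  "cone_of gen S = {(\<Sum>\<rho>\<in>S. c \<rho> *\<^sub>R rvec (gen \<rho>)) | c. \<forall>\<rho>\<in>S. c \<rho> \<ge> 0}"

definition primitive :: "int ^ 'n \<Rightarrow> bool" where
  "primitive v \<longleftrightarrow> v \<noteq> 0 \<and> (\<forall>(k::int) w. v = k *s w \<longrightarrow> k = 1 \<or> k = -1)"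

definition lattice_basis :: "('r \<Rightarrow> int ^ 'n) \<Rightarrow> 'r set \<Rightarrow> bool" where
  "lattice_basis gen S \<longleftrightarrow> inj_on gen S \<and>
     (\<forall>v. \<exists>c. v = (\<Sum>\<rho>\<in>S. c \<rho> *s gen \<rho>)) \<and>
     (\<forall>c. (\<Sum>\<rho>\<in>S. c \<rho> *s gen \<rho>) = 0 \<longrightarrow> (\<forall>\<rho>\<in>S. c \<rho> = 0))"

definition complete_regular_fan :: "('r::finite \<Rightarrow> int ^ 'n::finite) \<Rightarrow> 'r set set \<Rightarrow> bool" where
  "complete_regular_fan gen Dmax \<longleftrightarrow>
     inj gen \<and> (\<forall>\<rho>. primitive (gen \<rho>)) \<and>
     (\<forall>\<rho>. \<exists>\<sigma>\<in>Dmax. \<rho> \<in> \<sigma>) \<and>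
     (\<forall>\<sigma>\<in>Dmax. lattice_basis gen \<sigma>) \<and>
     (\<forall>\<sigma>\<in>Dmax. \<forall>\<tau>\<in>Dmax. cone_of gen \<sigma> \<inter> cone_of gen \<tau> = cone_of gen (\<sigma> \<inter> \<tau>)) \<and>
     (\<Union>\<sigma>\<in>Dmax. cone_of gen \<sigma>) = UNIV"

text \<open>Projectivity: existence of an ample T-divisor sum d_rho D_rho, i.e. a strictly convex
support function (standard criterion for complete smooth fans).\<close>
definition projective_fan :: "('r::finite \<Rightarrow> int ^ 'n::finite) \<Rightarrow> 'r set set \<Rightarrow> bool" where
  "projective_fan gen Dmax \<longleftrightarrow>
     (\<exists>d::'r \<Rightarrow> int. \<forall>\<sigma>\<in>Dmax. \<exists>m. (\<forall>\<rho>\<in>\<sigma>. pair m (gen \<rho>) = - d \<rho>) \<and>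
                                  (\<forall>\<rho>. \<rho> \<notin> \<sigma> \<longrightarrow> pair m (gen \<rho>) > - d \<rho>))"

definition m_sigma :: "('r \<Rightarrow> int ^ 'n) \<Rightarrow> 'r set \<Rightarrow> int ^ 'n" where
  "m_sigma gen \<sigma> = (THE m. \<forall>\<rho>\<in>\<sigma>. pair m (gen \<rho>) = 1)"

text \<open>-K_X globally generated: the anticanonical support function is convex.\<close>
definition anticanonical_gg :: "('r::finite \<Rightarrow> int ^ 'n::finite) \<Rightarrow> 'r set set \<Rightarrow> bool" where
  "anticanonical_gg gen Dmax \<longleftrightarrow>
     (\<forall>\<sigma>\<in>Dmax. \<forall>m. (\<forall>\<rho>\<in>\<sigma>. pair m (gen \<rho>) = 1) \<longrightarrow> (\<forall>\<rho>. pair m (gen \<rho>) \<le> 1))"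

definition a_coef :: "('r \<Rightarrow> int ^ 'n) \<Rightarrow> 'r set \<Rightarrow> 'r \<Rightarrow> int" where
  "a_coef gen \<sigma> \<rho> = 1 - pair (m_sigma gen \<sigma>) (gen \<rho>)"

definition monD0 :: "('r::finite \<Rightarrow> int ^ 'n) \<Rightarrow> 'r set \<Rightarrow> ('r \<Rightarrow> nat) \<Rightarrow> real" where
  "monD0 gen \<sigma> X = (\<Prod>\<rho>\<in>UNIV. real (X \<rho>) ^ nat (a_coef gen \<sigma> \<rho>))"

definition A_set :: "('r::finite \<Rightarrow> int ^ 'n) \<Rightarrow> 'r set set \<Rightarrow> real \<Rightarrow> ('r \<Rightarrow> nat) set" where
  "A_set gen Dmax B = {X. (\<forall>\<rho>. X \<rho> \<ge> 1) \<and> Max ((\<lambda>\<sigma>. monD0 gen \<sigma> X) ` Dmax) \<le> B}"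

text \<open>Multivariate integer polynomials in variables indexed by 'r:
coefficient functions on exponent vectors with finite support.\<close>
definition is_mpoly :: "(('r \<Rightarrow> nat) \<Rightarrow> int) \<Rightarrow> bool" where
  "is_mpoly \<phi> \<longleftrightarrow> finite {\<alpha>. \<phi> \<alpha> \<noteq> 0}"

definition mpoly_eval :: "(('r::finite \<Rightarrow> nat) \<Rightarrow> int) \<Rightarrow> ('r \<Rightarrow> nat) \<Rightarrow> int" where
  "mpoly_eval \<phi> X = (\<Sum>\<alpha>\<in>{\<alpha>. \<phi> \<alpha> \<noteq> 0}. \<phi> \<alpha> * (\<Prod>\<rho>\<in>UNIV. int (X \<rho>) ^ \<alpha> \<rho>))"

definition mpoly_degree :: "(('r::finite \<Rightarrow> nat) \<Rightarrow> int) \<Rightarrow> nat" where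
  "mpoly_degree \<phi> = Max ((\<lambda>\<alpha>. \<Sum>\<rho>\<in>UNIV. \<alpha> \<rho>) ` {\<alpha>. \<phi> \<alpha> \<noteq> 0})"

definition A_phi :: "('r::finite \<Rightarrow> int ^ 'n) \<Rightarrow> 'r set set \<Rightarrow> (('r \<Rightarrow> nat) \<Rightarrow> int) \<Rightarrow> real \<Rightarrow> ('r \<Rightarrow> nat) set" where
  "A_phi gen Dmax \<phi> B = {X \<in> A_set gen Dmax B. mpoly_eval \<phi> X = 0}"

end

theory Submission imports Defs "HOL-Library.Discrete_Functions" "HOL-Computational_Algebra.Polynomial" begin


lemma pair_sum: "pair m (\<Sum>\<rho>\<in>S. c \<rho> *s g \<rho>) = (\<Sum>\<rho>\<in>S. c \<rho> * pair m (g \<rho>))"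
  unfolding pair_def by (simp add: sum_distrib_left mult.left_commute sum.swap[of _ UNIV S])

lemma vec_axis_sum: "(v::int^'n) = (\<Sum>i\<in>UNIV. (v $ i) *s axis i 1)"
  by (simp add: vec_eq_iff axis_def if_distrib cong: if_cong)

lemma dual_exists:
  fixes gen :: "'r \<Rightarrow> int^'n" and h :: "'r \<Rightarrow> int"
  assumes lb: "lattice_basis gen \<sigma>" and fin: "finite \<sigma>"
  shows "\<exists>f. \<forall>\<rho>\<in>\<sigma>. pair f (gen \<rho>) = h \<rho>"
proof -
  from lb have span: "\<forall>v. \<exists>c. v = (\<Sum>\<rho>\<in>\<sigma>. c \<rho> *s gen \<rho>)"
    and ind: "\<forall>c. (\<Sum>\<rho>\<in>\<sigma>. c \<rho> *s gen \<rho>) = 0 \<longrightarrow> (\<forall>\<rho>\<in>\<sigma>. c \<rho> = 0)"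
    by (auto simp: lattice_basis_def)
  have "\<forall>i. \<exists>c. axis i 1 = (\<Sum>\<rho>\<in>\<sigma>. c \<rho> *s gen \<rho>)" using span by blast
  then obtain C where C: "\<And>i. axis i 1 = (\<Sum>\<rho>\<in>\<sigma>. C i \<rho> *s gen \<rho>)" by metis
  define f where "f = (\<chi> i. \<Sum>\<rho>\<in>\<sigma>. C i \<rho> * h \<rho>)"
  have key: "(\<Sum>i\<in>UNIV. gen \<tau> $ i * C i \<rho>) = (if \<rho> = \<tau> then 1 else 0)"
    if \<tau>: "\<tau> \<in> \<sigma>" and \<rho>: "\<rho> \<in> \<sigma>" for \<tau> \<rho>
  proof -
    define a where "a \<rho>' = (\<Sum>i\<in>UNIV. gen \<tau> $ i * C i \<rho>')" for \<rho>'
    have e1: "gen \<tau> $ j = (\<Sum>\<rho>'\<in>\<sigma>. a \<rho>' * gen \<rho>' $ j)" for j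
    proof -
      have "gen \<tau> $ j = (\<Sum>i\<in>UNIV. (gen \<tau> $ i *s axis i 1)) $ j"
        using vec_axis_sum[of "gen \<tau>"] by simp
      also have "\<dots> = (\<Sum>i\<in>UNIV. gen \<tau> $ i * (\<Sum>\<rho>'\<in>\<sigma>. C i \<rho>' * gen \<rho>' $ j))"
        by (subst C) simp
      also have "\<dots> = (\<Sum>\<rho>'\<in>\<sigma>. a \<rho>' * gen \<rho>' $ j)"
        unfolding a_def by (simp add: sum_distrib_left sum_distrib_right mult.assoc sum.swap[of _ UNIV \<sigma>])
      finally show ?thesis .
    qed
    have "(\<Sum>\<rho>'\<in>\<sigma>. (a \<rho>' - (if \<rho>' = \<tau> then 1 else 0)) *s gen \<rho>') = 0"
    proof (simp add: vec_eq_iff left_diff_distrib sum_subtractf, intro allI)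
      fix j
      have "(\<Sum>x\<in>\<sigma>. (if x = \<tau> then 1 else 0) * gen x $ j) = gen \<tau> $ j"
      proof -
        have eq: "(\<lambda>x. (if x = \<tau> then 1 else 0) * gen x $ j) = (\<lambda>x. if x = \<tau> then gen x $ j else 0)" by auto
        show ?thesis unfolding eq using \<tau> fin by simp
      qed
      then show "(\<Sum>x\<in>\<sigma>. a x * gen x $ j) = (\<Sum>x\<in>\<sigma>. (if x = \<tau> then 1 else 0) * gen x $ j)"
        using e1 by simp
    qed
    then have "a \<rho> - (if \<rho> = \<tau> then 1 else 0) = 0"
      using ind[rule_format, of "\<lambda>\<rho>'. a \<rho>' - (if \<rho>' = \<tau> then 1 else 0)"] \<rho> by blast
    then show ?thesis unfolding a_def by simp
  qed
  have "pair f (gen \<tau>) = h \<tau>" if \<tau>: "\<tau> \<in> \<sigma>" for \<tau>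
  proof -
    have "pair f (gen \<tau>) = (\<Sum>i\<in>UNIV. (\<Sum>\<rho>\<in>\<sigma>. C i \<rho> * h \<rho>) * gen \<tau> $ i)"
      by (simp add: pair_def f_def)
    also have "\<dots> = (\<Sum>\<rho>\<in>\<sigma>. h \<rho> * (\<Sum>i\<in>UNIV. gen \<tau> $ i * C i \<rho>))"
      by (simp add: sum_distrib_left sum_distrib_right mult.commute mult.left_commute sum.swap[of _ UNIV \<sigma>])
    also have "\<dots> = (\<Sum>\<rho>\<in>\<sigma>. h \<rho> * (if \<rho> = \<tau> then 1 else 0))"
      using key \<tau> by (intro sum.cong) auto
    also have "\<dots> = h \<tau>"
    proof -
      have eq: "(\<lambda>x. h x * (if x = \<tau> then 1 else 0)) = (\<lambda>x. if x = \<tau> then h x else 0)" by auto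
      show ?thesis unfolding eq using \<tau> fin by simp
    qed
    finally show ?thesis .
  qed
  then show ?thesis by blast
qed

definition rp :: "int^'n \<Rightarrow> real^'n \<Rightarrow> real" where
  "rp m w = (\<Sum>i\<in>UNIV. real_of_int (m $ i) * w $ i)"

lemma rp_rvec: "rp m (rvec v) = real_of_int (pair m v)"
  by (simp add: rp_def rvec_def pair_def)

lemma rp_sum: "rp f (\<Sum>\<rho>\<in>S. c \<rho> *\<^sub>R w \<rho>) = (\<Sum>\<rho>\<in>S. c \<rho> * rp f (w \<rho>))"
  unfolding rp_def by (simp add: sum_distrib_left mult.left_commute sum.swap[of _ UNIV S])

lemma rvec_uminus: "rvec (- v) = - rvec v"
  by (simp add: rvec_def vec_eq_iff)

lemma rp_uminus: "rp f (- w) = - rp f w"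
  by (simp add: rp_def sum_negf)

locale fanctx =
  fixes gen :: "'r::finite \<Rightarrow> int^'n::finite" and Dmax :: "'r set set"
  assumes crf: "complete_regular_fan gen Dmax" and gg: "anticanonical_gg gen Dmax"
begin

lemma lb: "\<sigma> \<in> Dmax \<Longrightarrow> lattice_basis gen \<sigma>"
  using crf by (simp add: complete_regular_fan_def)

lemma finite_Dmax: "finite Dmax"
  by (rule finite_subset[of _ "Pow UNIV"]) auto

lemma Dmax_ne: "Dmax \<noteq> {}"
  using crf by (auto simp: complete_regular_fan_def)

lemma covers: "\<exists>\<sigma>\<in>Dmax. rvec v \<in> cone_of gen \<sigma>"
proof -
  have "rvec v \<in> (\<Union>\<sigma>\<in>Dmax. cone_of gen \<sigma>)" using crf by (simp add: complete_regular_fan_def)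
  then show ?thesis by blast
qed

lemma pair_diff: "pair m v - pair m' v = pair (m - m') v"
  by (simp add: pair_def sum_subtractf left_diff_distrib)

lemma pair_axis: "pair m (axis i 1) = m $ i"
proof -
  have eq: "(\<lambda>j. m $ j * axis i 1 $ j) = (\<lambda>j. if j = i then m $ i else 0)"
    by (auto simp: axis_def)
  show ?thesis unfolding pair_def eq by simp
qed

lemma m_sigma: assumes "\<sigma> \<in> Dmax" shows "\<forall>\<rho>\<in>\<sigma>. pair (m_sigma gen \<sigma>) (gen \<rho>) = 1"
proof -
  have lbs: "lattice_basis gen \<sigma>" using lb assms .
  obtain f where f: "\<forall>\<rho>\<in>\<sigma>. pair f (gen \<rho>) = 1"
    using dual_exists[OF lbs, of "\<lambda>_. 1"] by auto
  have uniq: "m = f" if m: "\<forall>\<rho>\<in>\<sigma>. pair m (gen \<rho>) = 1" for m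
  proof -
    have "pair (m - f) v = 0" for v
    proof -
      have "\<forall>v. \<exists>c. v = (\<Sum>\<rho>\<in>\<sigma>. c \<rho> *s gen \<rho>)" using lbs by (simp add: lattice_basis_def)
      then obtain c where v: "v = (\<Sum>\<rho>\<in>\<sigma>. c \<rho> *s gen \<rho>)" by blast
      have "pair (m - f) v = (\<Sum>\<rho>\<in>\<sigma>. c \<rho> * pair (m - f) (gen \<rho>))" by (simp add: v pair_sum)
      also have "\<dots> = 0" using m f by (simp add: pair_diff[symmetric])
      finally show ?thesis .
    qed
    then have "(m - f) $ i = 0" for i using pair_axis[of "m - f" i] by simp
    then show ?thesis by (simp add: vec_eq_iff)
  qed
  have "\<exists>!m. \<forall>\<rho>\<in>\<sigma>. pair m (gen \<rho>) = 1" using f uniq by blast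
  then show ?thesis unfolding m_sigma_def by (rule theI')
qed

lemma a_zero: "\<sigma> \<in> Dmax \<Longrightarrow> \<rho> \<in> \<sigma> \<Longrightarrow> a_coef gen \<sigma> \<rho> = 0"
  using m_sigma by (simp add: a_coef_def)

lemma a_nonneg: "\<sigma> \<in> Dmax \<Longrightarrow> a_coef gen \<sigma> \<rho> \<ge> 0"
  using m_sigma gg by (simp add: a_coef_def anticanonical_gg_def)

lemma exists_avoid: "\<exists>\<sigma>\<in>Dmax. \<rho>0 \<notin> \<sigma>"
proof (rule ccontr)
  assume "\<not> ?thesis"
  then have all: "\<And>\<sigma>. \<sigma> \<in> Dmax \<Longrightarrow> \<rho>0 \<in> \<sigma>" by blast
  obtain \<sigma> where \<sigma>: "\<sigma> \<in> Dmax" and cone: "rvec (- gen \<rho>0) \<in> cone_of gen \<sigma>"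
    using covers by blast
  obtain c where c0: "\<forall>\<rho>\<in>\<sigma>. c \<rho> \<ge> 0" and ceq: "rvec (- gen \<rho>0) = (\<Sum>\<rho>\<in>\<sigma>. c \<rho> *\<^sub>R rvec (gen \<rho>))"
    using cone by (auto simp: cone_of_def)
  have r0: "\<rho>0 \<in> \<sigma>" using all \<sigma> .
  obtain f where f: "\<forall>\<rho>\<in>\<sigma>. pair f (gen \<rho>) = (if \<rho> = \<rho>0 then 1 else 0)"
    using dual_exists[OF lb[OF \<sigma>], of "\<lambda>\<rho>. if \<rho> = \<rho>0 then 1 else 0"] by auto
  have "rp f (rvec (- gen \<rho>0)) = -1" using f r0 by (simp add: rvec_uminus rp_uminus rp_rvec)
  moreover have "rp f (rvec (- gen \<rho>0)) = (\<Sum>\<rho>\<in>\<sigma>. c \<rho> * (if \<rho> = \<rho>0 then 1 else 0))"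
    unfolding ceq rp_sum using f by (intro sum.cong) (auto simp: rp_rvec)
  moreover have "\<dots> = c \<rho>0"
  proof -
    have eq: "(\<lambda>\<rho>. c \<rho> * (if \<rho> = \<rho>0 then 1 else 0)) = (\<lambda>\<rho>. if \<rho> = \<rho>0 then c \<rho> else 0)" by auto
    show ?thesis unfolding eq using r0 by simp
  qed
  ultimately have "c \<rho>0 = -1" by simp
  moreover have "c \<rho>0 \<ge> 0" using c0 r0 by blast
  ultimately show False by simp
qed

lemma card_ge: assumes "\<sigma> \<in> Dmax" shows "CARD('n) \<le> card \<sigma>"
proof -
  have lbs: "lattice_basis gen \<sigma>" using lb assms .
  let ?W = "(\<lambda>\<rho>. rvec (gen \<rho>)) ` \<sigma>"
  have "b \<in> span ?W" if "b \<in> Basis" for b :: "real^'n"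
  proof -
    obtain i where bi: "b = axis i 1" using \<open>b \<in> Basis\<close> by (auto simp: Basis_vec_def)
    have "\<forall>v. \<exists>c. v = (\<Sum>\<rho>\<in>\<sigma>. c \<rho> *s gen \<rho>)" using lbs by (simp add: lattice_basis_def)
    then obtain c where ci: "axis i 1 = (\<Sum>\<rho>\<in>\<sigma>. c \<rho> *s gen \<rho>)" by blast
    have "b = (\<Sum>\<rho>\<in>\<sigma>. real_of_int (c \<rho>) *\<^sub>R rvec (gen \<rho>))"
    proof -
      have "b = rvec (axis i 1)" by (simp add: bi rvec_def axis_def vec_eq_iff)
      also have "\<dots> = (\<Sum>\<rho>\<in>\<sigma>. real_of_int (c \<rho>) *\<^sub>R rvec (gen \<rho>))"
        by (subst ci) (simp add: rvec_def vec_eq_iff)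
      finally show ?thesis .
    qed
    also have "\<dots> \<in> span ?W"
      by (intro span_sum span_scale span_base) auto
    finally show ?thesis .
  qed
  then have B: "Basis \<subseteq> span ?W" by blast
  have "UNIV \<subseteq> span ?W" using span_minimal[OF B subspace_span] by simp
  then have "dim (UNIV :: (real^'n) set) \<le> card ?W" by (intro dim_le_card) auto
  also have "\<dots> \<le> card \<sigma>" by (rule card_image_le) simp
  finally show ?thesis by simp
qed

definition Mg :: real where "Mg = 1 + (\<Sum>\<rho>\<in>UNIV. \<Sum>i\<in>UNIV. \<bar>real_of_int (gen \<rho> $ i)\<bar>)"

lemma Mg_ge: "\<bar>real_of_int (gen \<rho> $ i)\<bar> \<le> Mg"
proof -
  have "\<bar>real_of_int (gen \<rho> $ i)\<bar> \<le> (\<Sum>i\<in>UNIV. \<bar>real_of_int (gen \<rho> $ i)\<bar>)"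
    by (rule member_le_sum) auto
  also have "\<dots> \<le> (\<Sum>\<rho>\<in>UNIV. \<Sum>i\<in>UNIV. \<bar>real_of_int (gen \<rho> $ i)\<bar>)"
    by (rule member_le_sum[where f="\<lambda>\<rho>. \<Sum>i\<in>UNIV. \<bar>real_of_int (gen \<rho> $ i)\<bar>"]) (auto intro: sum_nonneg)
  finally show ?thesis unfolding Mg_def by simp
qed

lemma Mg_pos: "Mg \<ge> 1"
  unfolding Mg_def by (simp add: sum_nonneg)

lemma sum_identity:
  assumes "\<sigma> \<in> Dmax"
  shows "int (\<Sum>\<rho>\<in>UNIV. k \<rho>) = (\<Sum>\<rho>\<in>UNIV. a_coef gen \<sigma> \<rho> * int (k \<rho>))
           + pair (m_sigma gen \<sigma>) (\<Sum>\<rho>\<in>UNIV. int (k \<rho>) *s gen \<rho>)"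
  by (simp add: pair_sum a_coef_def sum.distrib[symmetric] algebra_simps)

lemma GL:
  fixes k :: "'r \<Rightarrow> nat"
  defines "u \<equiv> (\<Sum>\<rho>\<in>UNIV. int (k \<rho>) *s gen \<rho>)"
  shows "\<exists>\<sigma>\<in>Dmax. \<exists>C\<ge>0. real (\<Sum>\<rho>\<in>UNIV. k \<rho>) = real_of_int (\<Sum>\<rho>\<in>UNIV. a_coef gen \<sigma> \<rho> * int (k \<rho>)) - C
        \<and> (\<forall>i. \<bar>real_of_int (u $ i)\<bar> \<le> Mg * C)"
proof -
  obtain \<sigma> where \<sigma>: "\<sigma> \<in> Dmax" and cone: "rvec (- u) \<in> cone_of gen \<sigma>"
    using covers by blast
  obtain c where c0: "\<forall>\<rho>\<in>\<sigma>. c \<rho> \<ge> 0" and ceq: "rvec (- u) = (\<Sum>\<rho>\<in>\<sigma>. c \<rho> *\<^sub>R rvec (gen \<rho>))"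
    using cone by (auto simp: cone_of_def)
  define m where "m = m_sigma gen \<sigma>"
  define C where "C = (\<Sum>\<rho>\<in>\<sigma>. c \<rho>)"
  have C0: "C \<ge> 0" unfolding C_def using c0 by (simp add: sum_nonneg)
  have "real_of_int (pair m u) = - rp m (rvec (- u))"
    by (simp add: rvec_uminus rp_uminus rp_rvec)
  also have "\<dots> = - (\<Sum>\<rho>\<in>\<sigma>. c \<rho> * real_of_int (pair m (gen \<rho>)))"
    unfolding ceq rp_sum by (simp add: rp_rvec)
  also have "\<dots> = - C"
    unfolding C_def m_def using m_sigma[OF \<sigma>] by simp
  finally have pm: "real_of_int (pair m u) = - C" .
  have "real (\<Sum>\<rho>\<in>UNIV. k \<rho>) = real_of_int (int (\<Sum>\<rho>\<in>UNIV. k \<rho>))" by simp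
  also have "\<dots> = real_of_int (\<Sum>\<rho>\<in>UNIV. a_coef gen \<sigma> \<rho> * int (k \<rho>)) + real_of_int (pair m u)"
    unfolding sum_identity[OF \<sigma>, of k] m_def u_def by simp
  finally have e1: "real (\<Sum>\<rho>\<in>UNIV. k \<rho>) = real_of_int (\<Sum>\<rho>\<in>UNIV. a_coef gen \<sigma> \<rho> * int (k \<rho>)) - C"
    using pm by simp
  have "\<bar>real_of_int (u $ i)\<bar> \<le> Mg * C" for i
  proof -
    have "real_of_int (u $ i) = - (rvec (- u) $ i)" by (simp add: rvec_def)
    also have "\<dots> = - (\<Sum>\<rho>\<in>\<sigma>. c \<rho> * real_of_int (gen \<rho> $ i))"
      unfolding ceq by (simp add: rvec_def)
    finally have "\<bar>real_of_int (u $ i)\<bar> = \<bar>\<Sum>\<rho>\<in>\<sigma>. c \<rho> * real_of_int (gen \<rho> $ i)\<bar>" by simp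
    also have "\<dots> \<le> (\<Sum>\<rho>\<in>\<sigma>. \<bar>c \<rho> * real_of_int (gen \<rho> $ i)\<bar>)" by (rule sum_abs)
    also have "\<dots> \<le> (\<Sum>\<rho>\<in>\<sigma>. c \<rho> * Mg)"
    proof (rule sum_mono)
      fix \<rho> assume "\<rho> \<in> \<sigma>"
      then have "c \<rho> \<ge> 0" using c0 by blast
      then show "\<bar>c \<rho> * real_of_int (gen \<rho> $ i)\<bar> \<le> c \<rho> * Mg"
        by (simp add: abs_mult mult_left_mono Mg_ge)
    qed
    also have "\<dots> = Mg * C" unfolding C_def by (simp add: sum_distrib_left mult.commute)
    finally show ?thesis .
  qed
  then show ?thesis using e1 C0 \<sigma> by blast
qed

end


lemma box_subset: "{u::int^'n. \<forall>i. \<bar>u $ i\<bar> \<le> int N} \<subseteq> (\<lambda>f. \<chi> i. f i) ` (PiE UNIV (\<lambda>_. {-int N..int N}))"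
proof
  fix u :: "int^'n" assume u: "u \<in> {u. \<forall>i. \<bar>u $ i\<bar> \<le> int N}"
  have "-int N \<le> u $ i \<and> u $ i \<le> int N" for i
  proof -
    have "\<bar>u $ i\<bar> \<le> int N" using u by simp
    then show ?thesis by linarith
  qed
  then have "(\<lambda>i. u $ i) \<in> PiE UNIV (\<lambda>_. {-int N..int N})" by auto
  moreover have "u = (\<chi> i. (\<lambda>i. u $ i) i)" by simp
  ultimately show "u \<in> (\<lambda>f. \<chi> i. f i) ` (PiE UNIV (\<lambda>_. {-int N..int N}))" by blast
qed

lemma finite_box: "finite {u::int^'n. \<forall>i. \<bar>u $ i\<bar> \<le> int N}"
  by (rule finite_subset[OF box_subset]) (intro finite_imageI finite_PiE; auto)

lemma card_box: "card {u::int^'n. \<forall>i. \<bar>u $ i\<bar> \<le> int N} \<le> (2*N+1)^CARD('n)"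
proof -
  have "card {u::int^'n. \<forall>i. \<bar>u $ i\<bar> \<le> int N} \<le> card ((\<lambda>f. \<chi> i. f i) ` (PiE UNIV (\<lambda>_. {-int N..int N})) :: (int^'n) set)"
    by (intro card_mono finite_imageI finite_PiE box_subset) auto
  also have "\<dots> \<le> card (PiE (UNIV::'n set) (\<lambda>_. {-int N..int N}))" by (rule card_image_le) (auto intro: finite_PiE)
  also have "\<dots> = (2*N+1)^CARD('n)" by (simp add: card_PiE nat_add_distrib nat_mult_distrib)
  finally show ?thesis .
qed

context fanctx
begin

definition Kset :: "nat \<Rightarrow> ('r \<Rightarrow> nat) set" where
  "Kset L = {k. \<forall>\<sigma>\<in>Dmax. (\<Sum>\<rho>\<in>UNIV. a_coef gen \<sigma> \<rho> * int (k \<rho>)) \<le> int L}"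

definition uvec :: "('r \<Rightarrow> nat) \<Rightarrow> int^'n" where
  "uvec k = (\<Sum>\<rho>\<in>UNIV. int (k \<rho>) *s gen \<rho>)"

lemma Kset_sum:
  assumes "k \<in> Kset L"
  shows "sum k UNIV \<le> L" and "\<And>i. \<bar>real_of_int (uvec k $ i)\<bar> \<le> Mg * (real L - real (sum k UNIV))"
proof -
  obtain \<sigma> C where \<sigma>: "\<sigma> \<in> Dmax" and C0: "C \<ge> 0"
    and e: "real (\<Sum>\<rho>\<in>UNIV. k \<rho>) = real_of_int (\<Sum>\<rho>\<in>UNIV. a_coef gen \<sigma> \<rho> * int (k \<rho>)) - C"
    and ub: "\<forall>i. \<bar>real_of_int (uvec k $ i)\<bar> \<le> Mg * C"
    using GL[of k] unfolding uvec_def by blast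
  have "(\<Sum>\<rho>\<in>UNIV. a_coef gen \<sigma> \<rho> * int (k \<rho>)) \<le> int L" using assms \<sigma> by (auto simp: Kset_def)
  then have le: "real_of_int (\<Sum>\<rho>\<in>UNIV. a_coef gen \<sigma> \<rho> * int (k \<rho>)) \<le> real L" by linarith
  have CL: "C \<le> real L - real (sum k UNIV)" using e le by simp
  show "sum k UNIV \<le> L" using CL C0 by linarith
  fix i
  have "\<bar>real_of_int (uvec k $ i)\<bar> \<le> Mg * C" using ub by blast
  also have "\<dots> \<le> Mg * (real L - real (sum k UNIV))" using CL Mg_pos by (intro mult_left_mono) auto
  finally show "\<bar>real_of_int (uvec k $ i)\<bar> \<le> Mg * (real L - real (sum k UNIV))" .
qed

lemma Kset_le: "k \<in> Kset L \<Longrightarrow> k \<rho> \<le> L"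
  using Kset_sum(1)[of k L] member_le_sum[of \<rho> UNIV k] by fastforce

lemma Kset_finite: "finite (Kset L)"
proof (rule finite_subset)
  show "Kset L \<subseteq> PiE UNIV (\<lambda>_. {0..L})" using Kset_le by auto
qed (auto intro: finite_PiE)

lemma main_count:
  assumes \<sigma>0: "\<sigma>0 \<in> Dmax" and r0: "\<rho>0 \<notin> \<sigma>0" and r1: "\<rho>1 \<notin> \<sigma>0" "\<rho>1 \<noteq> \<rho>0"
    and a1: "a_coef gen \<sigma>0 \<rho>1 \<noteq> 0"
  shows "card {k\<in>Kset L. k \<rho>0 = 0 \<and> sum k UNIV = t}
     \<le> (2 * nat \<lceil>Mg\<rceil> * (L - t) + 1)^CARD('n) * (L+1)^card (UNIV - \<sigma>0 - {\<rho>0,\<rho>1})"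
proof -
  define rest where "rest = UNIV - \<sigma>0 - {\<rho>0,\<rho>1}"
  define S where "S = {k\<in>Kset L. k \<rho>0 = 0 \<and> sum k UNIV = t}"
  define N where "N = nat \<lceil>Mg\<rceil> * (L - t)"
  define U where "U = {u::int^'n. \<forall>i. \<bar>u $ i\<bar> \<le> int N}"
  define F where "F k = (uvec k, restrict k rest)" for k
  have FS: "F ` S \<subseteq> U \<times> PiE rest (\<lambda>_. {0..L})"
  proof
    fix x assume "x \<in> F ` S"
    then obtain k where k: "k \<in> S" and x: "x = F k" by blast
    have kK: "k \<in> Kset L" and t: "sum k UNIV = t" using k by (auto simp: S_def)
    have tL: "t \<le> L" using Kset_sum(1)[OF kK] t by simp
    have "\<bar>uvec k $ i\<bar> \<le> int N" for i
    proof -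
      have "\<bar>real_of_int (uvec k $ i)\<bar> \<le> Mg * (real L - real t)" using Kset_sum(2)[OF kK, of i] t by simp
      also have "\<dots> \<le> real (nat \<lceil>Mg\<rceil>) * (real L - real t)" using tL by (intro mult_right_mono) (auto, linarith)
      also have "\<dots> = real N" using tL by (simp add: N_def of_nat_diff)
      finally show ?thesis by linarith
    qed
    then have "uvec k \<in> U" by (simp add: U_def)
    moreover have "restrict k rest \<in> PiE rest (\<lambda>_. {0..L})" using Kset_le[OF kK] by auto
    ultimately show "x \<in> U \<times> PiE rest (\<lambda>_. {0..L})" by (simp add: x F_def)
  qed
  have inj: "inj_on F S"
  proof (rule inj_onI)
    fix k k' assume k: "k \<in> S" and k': "k' \<in> S" and Fe: "F k = F k'"
    have u: "uvec k = uvec k'" using Fe by (simp add: F_def)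
    have rr: "k \<rho> = k' \<rho>" if "\<rho> \<in> rest" for \<rho>
    proof -
      have "restrict k rest \<rho> = restrict k' rest \<rho>" using Fe by (simp add: F_def)
      then show ?thesis using that by simp
    qed
    have z: "k \<rho>0 = 0" "k' \<rho>0 = 0" and tt: "sum k UNIV = t" "sum k' UNIV = t" using k k' by (auto simp: S_def)
    have out: "k \<rho> = k' \<rho>" if "\<rho> \<notin> \<sigma>0" "\<rho> \<noteq> \<rho>1" for \<rho>
      using rr[of \<rho>] z that by (cases "\<rho> = \<rho>0") (auto simp: rest_def)
    let ?a = "a_coef gen \<sigma>0"
    have s1: "(\<Sum>\<rho>\<in>UNIV. ?a \<rho> * int (k \<rho>)) = (\<Sum>\<rho>\<in>UNIV. ?a \<rho> * int (k' \<rho>))"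
      using sum_identity[OF \<sigma>0, of k] sum_identity[OF \<sigma>0, of k'] u tt by (simp add: uvec_def)
    have s2: "(\<Sum>\<rho>\<in>UNIV - {\<rho>1}. ?a \<rho> * int (k \<rho>)) = (\<Sum>\<rho>\<in>UNIV - {\<rho>1}. ?a \<rho> * int (k' \<rho>))"
    proof (rule sum.cong)
      fix \<rho> assume "\<rho> \<in> UNIV - {\<rho>1}"
      then show "?a \<rho> * int (k \<rho>) = ?a \<rho> * int (k' \<rho>)"
        using out[of \<rho>] a_zero[OF \<sigma>0, of \<rho>] by (cases "\<rho> \<in> \<sigma>0") auto
    qed simp
    have "?a \<rho>1 * int (k \<rho>1) = ?a \<rho>1 * int (k' \<rho>1)"
      using s1 s2 sum.remove[of UNIV \<rho>1 "\<lambda>\<rho>. ?a \<rho> * int (k \<rho>)"] sum.remove[of UNIV \<rho>1 "\<lambda>\<rho>. ?a \<rho> * int (k' \<rho>)"]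
      by simp
    then have e1: "k \<rho>1 = k' \<rho>1" using a1 by simp
    have out2: "k \<rho> = k' \<rho>" if "\<rho> \<notin> \<sigma>0" for \<rho> using out e1 that by blast
    define d where "d \<rho> = int (k \<rho>) - int (k' \<rho>)" for \<rho>
    have "(\<Sum>\<rho>\<in>UNIV. d \<rho> *s gen \<rho>) = 0"
      using u by (simp add: uvec_def d_def vec_eq_iff left_diff_distrib sum_subtractf)
    moreover have "(\<Sum>\<rho>\<in>UNIV. d \<rho> *s gen \<rho>) = (\<Sum>\<rho>\<in>\<sigma>0. d \<rho> *s gen \<rho>)"
      by (rule sum.mono_neutral_right) (auto simp: d_def out2)
    ultimately have "(\<Sum>\<rho>\<in>\<sigma>0. d \<rho> *s gen \<rho>) = 0" by simp
    then have "\<forall>\<rho>\<in>\<sigma>0. d \<rho> = 0" using lb[OF \<sigma>0] unfolding lattice_basis_def by blast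
    then show "k = k'" using out2 by (auto simp: d_def fun_eq_iff)
  qed
  have "card S = card (F ` S)" using inj by (simp add: card_image)
  also have "\<dots> \<le> card (U \<times> PiE rest (\<lambda>_. {0..L}))"
    by (intro card_mono FS finite_cartesian_product finite_PiE) (auto simp: U_def finite_box)
  also have "\<dots> = card U * (L+1)^card rest" by (simp add: card_cartesian_product card_PiE)
  also have "\<dots> \<le> (2*N+1)^CARD('n) * (L+1)^card rest" unfolding U_def by (intro mult_right_mono card_box) auto
  finally show ?thesis by (simp add: S_def N_def rest_def mult.assoc)
qed

end


lemma pow_fact_le_exp: "0 \<le> x \<Longrightarrow> x^n / fact n \<le> exp (x::real)"
proof -
  assume x: "0 \<le> x"
  have "(\<lambda>n. x^n /\<^sub>R fact n) sums exp x" by (rule exp_converges)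
  then have "(\<lambda>n. x^n / fact n) sums exp x" by (simp add: divide_inverse mult.commute)
  then have s: "summable (\<lambda>n. x^n / fact n)" and e: "exp x = (\<Sum>n. x^n / fact n)"
    by (auto simp: sums_iff)
  have "(\<Sum>m\<in>{n}. x^m / fact m) \<le> (\<Sum>m. x^m / fact m)"
    by (rule sum_le_suminf[OF s]) (use x in auto)
  then show ?thesis using e by simp
qed

lemma geom_34: "(\<Sum>j\<in>{0..L}. (3/4::real)^j) \<le> 4"
proof -
  have "{0..L} = {..<Suc L}" by auto
  then have "(\<Sum>j\<in>{0..L}. (3/4::real)^j) = ((3/4)^Suc L - 1) / (3/4 - 1)"
    by (simp add: geometric_sum)
  also have "\<dots> = 4 - 4 * (3/4)^Suc L" by (simp add: field_simps)
  also have "\<dots> \<le> 4" by simp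
  finally show ?thesis .
qed

lemma poly_geom: "\<exists>C. \<forall>L. (\<Sum>t\<in>{0..L}. 2^t * real ((2*M*(L-t)+1)^n)) \<le> C * 2^L"
proof -
  define s :: real where "s = ln (3/2)"
  have s0: "s > 0" unfolding s_def by simp
  define K where "K = real ((2*M+1)^n) * fact n / s^n * (3/2)"
  have four: "(4::real)^j = 2^j * 2^j" for j
    by (metis power_mult_distrib mult_2_right numeral_Bit0 numeral_One one_add_one)
  have termb: "real ((2*M*j+1)^n) / 2^j \<le> K * (3/4)^j" for j
  proof -
    have "2*M*j+1 \<le> (2*M+1)*(j+1)" by (simp add: algebra_simps)
    then have "real ((2*M*j+1)^n) \<le> real ((2*M+1)^n) * real (j+1)^n"
      by (metis of_nat_le_iff of_nat_mult of_nat_power power_mono zero_le power_mult_distrib)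
    moreover have "real (j+1)^n \<le> fact n / s^n * (3/2)^(j+1)"
    proof -
      have "(s * real (j+1))^n / fact n \<le> exp (s * real (j+1))"
        using s0 by (intro pow_fact_le_exp) simp
      also have "exp (s * real (j+1)) = exp s ^ (j+1)"
        by (metis exp_of_nat_mult mult.commute)
      also have "exp s = 3/2" unfolding s_def by simp
      finally have A: "(s * real (j+1))^n / fact n \<le> (3/2)^(j+1)" .
      have "(s * real (j+1))^n \<le> (3/2)^(j+1) * fact n"
        using A by (simp add: pos_divide_le_eq)
      then have "s^n * real (j+1)^n \<le> (3/2)^(j+1) * fact n"
        by (simp only: power_mult_distrib)
      then show ?thesis using s0 by (simp add: field_simps)
    qed
    ultimately have "real ((2*M*j+1)^n) \<le> real ((2*M+1)^n) * (fact n / s^n * (3/2)^(j+1))"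
      by (meson order_trans mult_left_mono of_nat_0_le_iff)
    also have "\<dots> = K * (3/4)^j * 2^j"
    proof -
      have e: "(3/2::real)^(j+1) = (3/2) * ((3/4)^j * 2^j)" by (simp add: power_mult_distrib[symmetric])
      define q where "q = (3/4::real)^j"
      define p2 where "p2 = (2::real)^j"
      show ?thesis unfolding e K_def q_def[symmetric] p2_def[symmetric] by (simp add: field_simps)
    qed
    finally show ?thesis by (simp add: field_simps)
  qed
  have "(\<Sum>t\<in>{0..L}. 2^t * real ((2*M*(L-t)+1)^n)) \<le> (4*K) * 2^L" for L
  proof -
    have "(\<Sum>t\<in>{0..L}. (2::real)^t * real ((2*M*(L-t)+1)^n))
        = (\<Sum>j\<in>{0..L}. 2^(L-j) * real ((2*M*(L-(L-j))+1)^n))"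
      by (subst sum.atLeastAtMost_rev) simp
    also have "\<dots> = (\<Sum>j\<in>{0..L}. 2^L * (real ((2*M*j+1)^n) / 2^j))"
      by (intro sum.cong) (auto simp: power_diff)
    also have "\<dots> \<le> (\<Sum>j\<in>{0..L}. 2^L * (K * (3/4)^j))"
      by (intro sum_mono mult_left_mono termb) auto
    also have "\<dots> = 2^L * K * (\<Sum>j\<in>{0..L}. (3/4)^j)" by (simp add: sum_distrib_left mult.assoc)
    also have "\<dots> \<le> 2^L * K * 4"
      using geom_34[of L] s0 by (intro mult_left_mono) (auto simp: K_def)
    finally show ?thesis by (simp add: mult.commute mult.left_commute)
  qed
  then show ?thesis by blast
qed


context fanctx
begin

lemma K0_finite: "finite {k\<in>Kset L. k \<rho>0 = 0}"
  using Kset_finite by simp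

lemma main_sum:
  assumes \<sigma>0: "\<sigma>0 \<in> Dmax" and r0: "\<rho>0 \<notin> \<sigma>0" and r1: "\<rho>1 \<notin> \<sigma>0" "\<rho>1 \<noteq> \<rho>0"
    and a1: "a_coef gen \<sigma>0 \<rho>1 \<noteq> 0"
  shows "\<exists>C. \<forall>L. real (\<Sum>k\<in>{k\<in>Kset L. k \<rho>0 = 0}. 2^(sum k UNIV))
            \<le> C * 2^L * real (L+1)^card (UNIV - \<sigma>0 - {\<rho>0,\<rho>1})"
proof -
  define p where "p = card (UNIV - \<sigma>0 - {\<rho>0,\<rho>1})"
  define M where "M = nat \<lceil>Mg\<rceil>"
  obtain C where C: "\<And>L. (\<Sum>t\<in>{0..L}. 2^t * real ((2*M*(L-t)+1)^CARD('n))) \<le> C * 2^L"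
    using poly_geom[of M "CARD('n)"] by blast
  have "real (\<Sum>k\<in>{k\<in>Kset L. k \<rho>0 = 0}. 2^(sum k UNIV)) \<le> C * 2^L * real (L+1)^p" for L
  proof -
    define K0 where "K0 = {k\<in>Kset L. k \<rho>0 = 0}"
    have fin: "finite K0" unfolding K0_def using K0_finite .
    have img: "(\<lambda>k. sum k UNIV) ` K0 \<subseteq> {0..L}" using Kset_sum(1) by (auto simp: K0_def)
    have "(\<Sum>k\<in>K0. (2::nat)^(sum k UNIV)) = (\<Sum>t\<in>{0..L}. \<Sum>k\<in>{k. k \<in> K0 \<and> sum k UNIV = t}. 2^(sum k UNIV))"
      by (rule sum.group[symmetric, OF fin _ img]) simp
    also have "\<dots> = (\<Sum>t\<in>{0..L}. 2^t * card {k\<in>Kset L. k \<rho>0 = 0 \<and> sum k UNIV = t})"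
    proof (rule sum.cong)
      fix t assume "t \<in> {0..L}"
      have "(\<Sum>k\<in>{k. k \<in> K0 \<and> sum k UNIV = t}. (2::nat)^(sum k UNIV)) = (\<Sum>k\<in>{k. k \<in> K0 \<and> sum k UNIV = t}. 2^t)"
        by (rule sum.cong) auto
      also have "\<dots> = 2^t * card {k\<in>Kset L. k \<rho>0 = 0 \<and> sum k UNIV = t}"
        by (simp add: K0_def conj_assoc)
      finally show "(\<Sum>k\<in>{k. k \<in> K0 \<and> sum k UNIV = t}. (2::nat)^(sum k UNIV)) = 2^t * card {k\<in>Kset L. k \<rho>0 = 0 \<and> sum k UNIV = t}" .
    qed simp
    also have "\<dots> \<le> (\<Sum>t\<in>{0..L}. 2^t * ((2*M*(L-t)+1)^CARD('n) * (L+1)^p))"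
      unfolding M_def p_def by (intro sum_mono mult_left_mono main_count[OF assms]) auto
    finally have le: "(\<Sum>k\<in>K0. (2::nat)^(sum k UNIV)) \<le> (\<Sum>t\<in>{0..L}. 2^t * ((2*M*(L-t)+1)^CARD('n) * (L+1)^p))" .
    have "real (\<Sum>k\<in>K0. (2::nat)^(sum k UNIV)) \<le> real (\<Sum>t\<in>{0..L}. 2^t * ((2*M*(L-t)+1)^CARD('n) * (L+1)^p))"
      using le by linarith
    also have "\<dots> = (\<Sum>t\<in>{0..L}. 2^t * real ((2*M*(L-t)+1)^CARD('n))) * real (L+1)^p"
      by (simp add: sum_distrib_right mult.assoc)
    also have "\<dots> \<le> C * 2^L * real (L+1)^p"
      using C[of L] by (intro mult_right_mono) auto
    finally show ?thesis unfolding K0_def .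
  qed
  then show ?thesis unfolding p_def by blast
qed

lemma degen_bound:
  assumes \<sigma>0: "\<sigma>0 \<in> Dmax" and r0: "\<rho>0 \<notin> \<sigma>0"
    and deg: "\<And>\<rho>. \<rho> \<notin> \<sigma>0 \<Longrightarrow> \<rho> \<noteq> \<rho>0 \<Longrightarrow> a_coef gen \<sigma>0 \<rho> = 0"
  shows "\<exists>\<theta>. 0 \<le> \<theta> \<and> \<theta> < 1 \<and> (\<forall>L. \<forall>k\<in>{k\<in>Kset L. k \<rho>0 = 0}. real (sum k UNIV) \<le> \<theta> * real L)"
proof -
  define m0 where "m0 = m_sigma gen \<sigma>0"
  define Mm where "Mm = (\<Sum>i\<in>UNIV. \<bar>real_of_int (m0 $ i)\<bar>)"
  have Mm0: "Mm \<ge> 0" unfolding Mm_def by (simp add: sum_nonneg)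
  define P where "P = Mm * Mg"
  have P0: "P \<ge> 0" unfolding P_def using Mm0 Mg_pos by simp
  define \<theta> where "\<theta> = P / (1 + P)"
  have th: "0 \<le> \<theta>" "\<theta> < 1" unfolding \<theta>_def using P0 by (auto simp: field_simps)
  have "real (sum k UNIV) \<le> \<theta> * real L" if k: "k \<in> Kset L" "k \<rho>0 = 0" for k L
  proof -
    have az: "(\<Sum>\<rho>\<in>UNIV. a_coef gen \<sigma>0 \<rho> * int (k \<rho>)) = 0"
    proof (rule sum.neutral, intro ballI)
      fix \<rho> :: 'r
      show "a_coef gen \<sigma>0 \<rho> * int (k \<rho>) = 0"
        using a_zero[OF \<sigma>0, of \<rho>] deg[of \<rho>] k(2) by (cases "\<rho> \<in> \<sigma>0"; cases "\<rho> = \<rho>0") auto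
    qed
    have "int (sum k UNIV) = pair m0 (uvec k)"
      using sum_identity[OF \<sigma>0, of k] az by (simp add: m0_def uvec_def)
    then have "real (sum k UNIV) = real_of_int (pair m0 (uvec k))"
      by (metis of_int_of_nat_eq)
    also have "\<dots> = (\<Sum>i\<in>UNIV. real_of_int (m0 $ i) * real_of_int (uvec k $ i))"
      by (simp add: pair_def of_int_sum)
    also have "\<dots> \<le> (\<Sum>i\<in>UNIV. \<bar>real_of_int (m0 $ i)\<bar> * (Mg * (real L - real (sum k UNIV))))"
    proof (rule sum_mono)
      fix i
      have "real_of_int (m0 $ i) * real_of_int (uvec k $ i) \<le> \<bar>real_of_int (m0 $ i)\<bar> * \<bar>real_of_int (uvec k $ i)\<bar>"
        by (metis abs_ge_self abs_mult)
      also have "\<dots> \<le> \<bar>real_of_int (m0 $ i)\<bar> * (Mg * (real L - real (sum k UNIV)))"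
        using Kset_sum(2)[OF k(1), of i] by (intro mult_left_mono) auto
      finally show "real_of_int (m0 $ i) * real_of_int (uvec k $ i) \<le> \<bar>real_of_int (m0 $ i)\<bar> * (Mg * (real L - real (sum k UNIV)))" .
    qed
    also have "\<dots> = P * (real L - real (sum k UNIV))"
      by (simp add: P_def Mm_def sum_distrib_right mult.assoc)
    finally have "real (sum k UNIV) \<le> P * (real L - real (sum k UNIV))" .
    then have "real (sum k UNIV) * (1 + P) \<le> P * real L" by (simp add: algebra_simps)
    then show ?thesis unfolding \<theta>_def using P0 by (simp add: field_simps)
  qed
  then show ?thesis using th by blast
qed

end


definition mon :: "('r::finite \<Rightarrow> nat) \<Rightarrow> ('r \<Rightarrow> nat) \<Rightarrow> int" where
  "mon \<alpha> X = (\<Prod>\<rho>\<in>UNIV. int (X \<rho>) ^ \<alpha> \<rho>)"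

definition supp :: "(('r \<Rightarrow> nat) \<Rightarrow> int) \<Rightarrow> ('r \<Rightarrow> nat) set" where
  "supp \<phi> = {\<alpha>. \<phi> \<alpha> \<noteq> 0}"

lemma eval_superset:
  assumes "finite A" "supp \<phi> \<subseteq> A"
  shows "mpoly_eval \<phi> X = (\<Sum>\<alpha>\<in>A. \<phi> \<alpha> * mon \<alpha> X)"
  unfolding mpoly_eval_def mon_def
  by (rule sum.mono_neutral_left) (use assms in \<open>auto simp: supp_def\<close>)

lemma mon_upd:
  assumes "\<beta> \<rho> = 0"
  shows "mon (\<beta>(\<rho> := j)) X = int (X \<rho>) ^ j * mon \<beta> X"
proof -
  have "mon (\<beta>(\<rho> := j)) X = int (X \<rho>) ^ j * (\<Prod>\<sigma>\<in>UNIV - {\<rho>}. int (X \<sigma>) ^ (\<beta>(\<rho> := j)) \<sigma>)"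
    unfolding mon_def by (subst prod.remove[of UNIV \<rho>]) auto
  also have "(\<Prod>\<sigma>\<in>UNIV - {\<rho>}. int (X \<sigma>) ^ (\<beta>(\<rho> := j)) \<sigma>) = (\<Prod>\<sigma>\<in>UNIV - {\<rho>}. int (X \<sigma>) ^ \<beta> \<sigma>)"
    by (intro prod.cong) auto
  also have "\<dots> = mon \<beta> X"
    unfolding mon_def using assms prod.remove[of UNIV \<rho> "\<lambda>\<sigma>. int (X \<sigma>) ^ \<beta> \<sigma>"] by simp
  finally show ?thesis .
qed

lemma mon_indep:
  assumes "\<beta> \<rho> = 0"
  shows "mon \<beta> (X(\<rho> := y)) = mon \<beta> X"
  unfolding mon_def using assms by (intro prod.cong) auto

lemma eval_indep:
  assumes "is_mpoly \<psi>" "\<And>\<beta>. \<psi> \<beta> \<noteq> 0 \<Longrightarrow> \<beta> \<rho> = 0"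
  shows "mpoly_eval \<psi> (X(\<rho> := y)) = mpoly_eval \<psi> X"
  unfolding mpoly_eval_def using assms mon_indep[of _ \<rho> X y] by (intro sum.cong) (auto simp: mon_def)

lemma sum_upd: "(\<Sum>\<sigma>\<in>UNIV. ((\<beta>::'r::finite \<Rightarrow> nat)(\<rho> := j)) \<sigma>) + \<beta> \<rho> = (\<Sum>\<sigma>\<in>UNIV. \<beta> \<sigma>) + (j::nat)"
proof -
  have "(\<Sum>\<sigma>\<in>UNIV. (\<beta>(\<rho> := j)) \<sigma>) = j + (\<Sum>\<sigma>\<in>UNIV - {\<rho>}. (\<beta>(\<rho> := j)) \<sigma>)"
    by (subst sum.remove[of UNIV \<rho>]) auto
  also have "(\<Sum>\<sigma>\<in>UNIV - {\<rho>}. (\<beta>(\<rho> := j)) \<sigma>) = (\<Sum>\<sigma>\<in>UNIV - {\<rho>}. \<beta> \<sigma>)"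
    by (intro sum.cong) auto
  finally show ?thesis by (simp add: sum.remove[of UNIV \<rho> \<beta>])
qed

lemma deg_ge: "is_mpoly \<phi> \<Longrightarrow> \<phi> \<alpha> \<noteq> 0 \<Longrightarrow> (\<Sum>\<rho>\<in>UNIV. \<alpha> \<rho>) \<le> mpoly_degree \<phi>"
  unfolding mpoly_degree_def is_mpoly_def by (rule Max_ge) auto

lemma deg_le:
  assumes "is_mpoly \<phi>" "\<exists>\<alpha>. \<phi> \<alpha> \<noteq> 0" "\<And>\<alpha>. \<phi> \<alpha> \<noteq> 0 \<Longrightarrow> (\<Sum>\<rho>\<in>UNIV. \<alpha> \<rho>) \<le> d"
  shows "mpoly_degree \<phi> \<le> d"
  unfolding mpoly_degree_def using assms by (subst Max_le_iff) (auto simp: is_mpoly_def)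

definition slice :: "(('r \<Rightarrow> nat) \<Rightarrow> int) \<Rightarrow> 'r \<Rightarrow> nat \<Rightarrow> ('r \<Rightarrow> nat) \<Rightarrow> int" where
  "slice \<phi> \<rho> j \<beta> = (if \<beta> \<rho> = 0 then \<phi> (\<beta>(\<rho> := j)) else 0)"

lemma slice_supp:
  "supp (slice \<phi> \<rho> j) \<subseteq> (\<lambda>\<alpha>. \<alpha>(\<rho> := 0)) ` supp \<phi>"
proof
  fix \<beta> assume "\<beta> \<in> supp (slice \<phi> \<rho> j)"
  then have b0: "\<beta> \<rho> = 0" and nz: "\<phi> (\<beta>(\<rho> := j)) \<noteq> 0" by (auto simp: supp_def slice_def split: if_splits)
  have e: "\<beta> = (\<beta>(\<rho> := j))(\<rho> := 0)" using b0 by (auto simp: fun_eq_iff)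
  show "\<beta> \<in> (\<lambda>\<alpha>. \<alpha>(\<rho> := 0)) ` supp \<phi>"
  proof -
    have mem: "\<beta>(\<rho> := j) \<in> supp \<phi>" using nz by (simp add: supp_def)
    have "(\<lambda>\<alpha>. \<alpha>(\<rho> := 0)) (\<beta>(\<rho> := j)) \<in> (\<lambda>\<alpha>. \<alpha>(\<rho> := 0)) ` supp \<phi>" by (rule imageI[OF mem])
    then show ?thesis by (subst e) assumption
  qed
qed

lemma slice_mpoly: "is_mpoly \<phi> \<Longrightarrow> is_mpoly (slice \<phi> \<rho> j)"
  using slice_supp[of \<phi> \<rho> j] unfolding is_mpoly_def supp_def
  by (meson finite_imageI finite_subset)

lemma slice_indep: "is_mpoly \<phi> \<Longrightarrow> mpoly_eval (slice \<phi> \<rho> j) (X(\<rho> := y)) = mpoly_eval (slice \<phi> \<rho> j) X"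
  by (rule eval_indep[OF slice_mpoly]) (auto simp: slice_def split: if_splits)

lemma eval_decomp:
  assumes mp: "is_mpoly \<phi>" and e: "\<And>\<alpha>. \<phi> \<alpha> \<noteq> 0 \<Longrightarrow> \<alpha> \<rho> \<le> e"
  shows "mpoly_eval \<phi> X = (\<Sum>j\<in>{0..e}. mpoly_eval (slice \<phi> \<rho> j) X * int (X \<rho>) ^ j)"
proof -
  define A0 where "A0 = (\<lambda>\<alpha>. \<alpha>(\<rho> := 0)) ` supp \<phi>"
  have finA0: "finite A0" using mp unfolding A0_def is_mpoly_def supp_def by simp
  have A0z: "\<beta> \<rho> = 0" if "\<beta> \<in> A0" for \<beta> using that by (auto simp: A0_def)
  define G where "G = (\<lambda>(j, \<beta>). \<beta>(\<rho> := j)) ` ({0..e} \<times> A0)"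
  have inj: "inj_on (\<lambda>(j, \<beta>). \<beta>(\<rho> := j)) ({0..e} \<times> A0)"
  proof (rule inj_onI, clarify)
    fix j \<beta> j' \<beta>' assume "\<beta> \<in> A0" "\<beta>' \<in> A0" and eq: "\<beta>(\<rho> := j) = \<beta>'(\<rho> := j')"
    then have z: "\<beta> \<rho> = 0" "\<beta>' \<rho> = 0" using A0z by auto
    have "j = j'" using fun_cong[OF eq, of \<rho>] by simp
    moreover have "\<beta> = \<beta>'"
    proof
      fix \<sigma> show "\<beta> \<sigma> = \<beta>' \<sigma>" using fun_cong[OF eq, of \<sigma>] z by (cases "\<sigma> = \<rho>") auto
    qed
    ultimately show "j = j' \<and> \<beta> = \<beta>'" by simp
  qed
  have suppG: "supp \<phi> \<subseteq> G"
  proof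
    fix \<alpha> assume a: "\<alpha> \<in> supp \<phi>"
    have "\<alpha> = (\<alpha>(\<rho> := 0))(\<rho> := \<alpha> \<rho>)" by simp
    moreover have "\<alpha> \<rho> \<in> {0..e}" using e a by (auto simp: supp_def)
    moreover have "\<alpha>(\<rho> := 0) \<in> A0" using a by (auto simp: A0_def)
    ultimately show "\<alpha> \<in> G" unfolding G_def by (metis (no_types, lifting) SigmaI case_prod_conv image_eqI)
  qed
  have finG: "finite G" unfolding G_def using finA0 by simp
  have "(\<Sum>j\<in>{0..e}. mpoly_eval (slice \<phi> \<rho> j) X * int (X \<rho>) ^ j)
      = (\<Sum>j\<in>{0..e}. \<Sum>\<beta>\<in>A0. \<phi> (\<beta>(\<rho> := j)) * mon (\<beta>(\<rho> := j)) X)"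
  proof (rule sum.cong)
    fix j assume "j \<in> {0..e}"
    have "mpoly_eval (slice \<phi> \<rho> j) X = (\<Sum>\<beta>\<in>A0. slice \<phi> \<rho> j \<beta> * mon \<beta> X)"
      using eval_superset[OF finA0] slice_supp[of \<phi> \<rho> j] unfolding A0_def by blast
    also have "\<dots> = (\<Sum>\<beta>\<in>A0. \<phi> (\<beta>(\<rho> := j)) * mon \<beta> X)"
      by (intro sum.cong) (auto simp: slice_def A0z)
    finally have "mpoly_eval (slice \<phi> \<rho> j) X * int (X \<rho>) ^ j = (\<Sum>\<beta>\<in>A0. \<phi> (\<beta>(\<rho> := j)) * mon \<beta> X * int (X \<rho>) ^ j)"
      by (simp add: sum_distrib_right)
    also have "\<dots> = (\<Sum>\<beta>\<in>A0. \<phi> (\<beta>(\<rho> := j)) * mon (\<beta>(\<rho> := j)) X)"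
    proof (rule sum.cong)
      fix \<beta> assume b: "\<beta> \<in> A0"
      show "\<phi> (\<beta>(\<rho> := j)) * mon \<beta> X * int (X \<rho>) ^ j = \<phi> (\<beta>(\<rho> := j)) * mon (\<beta>(\<rho> := j)) X"
        using mon_upd[of \<beta> \<rho> j X] A0z[OF b] by simp
    qed simp
    finally show "mpoly_eval (slice \<phi> \<rho> j) X * int (X \<rho>) ^ j = (\<Sum>\<beta>\<in>A0. \<phi> (\<beta>(\<rho> := j)) * mon (\<beta>(\<rho> := j)) X)" .
  qed simp
  also have "\<dots> = (\<Sum>(j, \<beta>)\<in>{0..e} \<times> A0. \<phi> (\<beta>(\<rho> := j)) * mon (\<beta>(\<rho> := j)) X)"
    by (rule sum.cartesian_product)
  also have "\<dots> = (\<Sum>\<alpha>\<in>G. \<phi> \<alpha> * mon \<alpha> X)"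
    unfolding G_def by (subst sum.reindex[OF inj]) (simp add: case_prod_unfold)
  also have "\<dots> = mpoly_eval \<phi> X" using eval_superset[OF finG suppG] by simp
  finally show ?thesis by simp
qed

lemma fiber_bound:
  fixes S :: "('r::finite \<Rightarrow> nat) set"
  assumes fin: "finite S" and down: "\<And>X \<rho>. X \<in> S \<Longrightarrow> X(\<rho> := 1) \<in> S"
    and mp: "is_mpoly \<phi>" and e_ge: "\<And>\<alpha>. \<phi> \<alpha> \<noteq> 0 \<Longrightarrow> \<alpha> \<rho> \<le> e"
  shows "card {X\<in>S. mpoly_eval (slice \<phi> \<rho> e) X \<noteq> 0 \<and> mpoly_eval \<phi> X = 0} \<le> e * card {X\<in>S. X \<rho> = 1}"
proof -
  define T where "T = {X\<in>S. X \<rho> = 1}"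
  define Z2 where "Z2 = {X\<in>S. mpoly_eval (slice \<phi> \<rho> e) X \<noteq> 0 \<and> mpoly_eval \<phi> X = 0}"
  define F where "F Y = {X\<in>S. X(\<rho> := 1) = Y \<and> mpoly_eval (slice \<phi> \<rho> e) X \<noteq> 0 \<and> mpoly_eval \<phi> X = 0}" for Y
  define p where "p Y = (\<Sum>j\<in>{0..e}. monom (mpoly_eval (slice \<phi> \<rho> j) Y) j)" for Y
  have peval: "poly (p Y) (int y) = mpoly_eval \<phi> (Y(\<rho> := y))" for Y y
  proof -
    have "mpoly_eval \<phi> (Y(\<rho> := y)) = (\<Sum>j\<in>{0..e}. mpoly_eval (slice \<phi> \<rho> j) (Y(\<rho> := y)) * int y ^ j)"
      using eval_decomp[OF mp e_ge, where X="Y(\<rho> := y)"] by simp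
    also have "\<dots> = (\<Sum>j\<in>{0..e}. mpoly_eval (slice \<phi> \<rho> j) Y * int y ^ j)"
      using slice_indep[OF mp] by simp
    finally show ?thesis by (simp add: p_def poly_sum poly_monom)
  qed
  have degp: "degree (p Y) \<le> e" for Y
    unfolding p_def by (rule degree_sum_le) (auto intro: order_trans[OF degree_monom_le])
  have coeffp: "coeff (p Y) e = mpoly_eval (slice \<phi> \<rho> e) Y" for Y
  proof -
    have "coeff (p Y) e = (\<Sum>j\<in>{0..e}. if j = e then mpoly_eval (slice \<phi> \<rho> j) Y else 0)"
      by (simp add: p_def coeff_sum)
    also have "\<dots> = mpoly_eval (slice \<phi> \<rho> e) Y" by (simp add: sum.delta')
    finally show ?thesis .
  qed
  have FY: "card (F Y) \<le> e" if Y: "Y \<in> T" for Y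
  proof (cases "F Y = {}")
    case True then show ?thesis by simp
  next
    case False
    then obtain X0 where X0: "X0 \<in> F Y" by blast
    have "mpoly_eval (slice \<phi> \<rho> e) Y = mpoly_eval (slice \<phi> \<rho> e) (X0(\<rho> := 1))"
      using X0 by (simp add: F_def)
    also have "\<dots> = mpoly_eval (slice \<phi> \<rho> e) X0" by (rule slice_indep[OF mp])
    finally have "mpoly_eval (slice \<phi> \<rho> e) Y \<noteq> 0" using X0 by (simp add: F_def)
    then have pnz: "p Y \<noteq> 0" using coeffp[of Y] by auto
    have sub: "F Y \<subseteq> (\<lambda>y. Y(\<rho> := y)) ` {y. poly (p Y) (int y) = 0}"
    proof
      fix X assume X: "X \<in> F Y"
      then have XY: "X(\<rho> := 1) = Y" by (simp add: F_def)
      have eqX: "X = Y(\<rho> := X \<rho>)"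
      proof
        fix x show "X x = (Y(\<rho> := X \<rho>)) x" using fun_cong[OF XY, of x] by (cases "x = \<rho>") auto
      qed
      have "poly (p Y) (int (X \<rho>)) = mpoly_eval \<phi> X" using peval[of Y "X \<rho>"] eqX by simp
      also have "\<dots> = 0" using X by (simp add: F_def)
      finally show "X \<in> (\<lambda>y. Y(\<rho> := y)) ` {y. poly (p Y) (int y) = 0}" using eqX by blast
    qed
    have finr: "finite {x. poly (p Y) x = 0}" by (rule poly_roots_finite[OF pnz])
    have "card (F Y) \<le> card ((\<lambda>y. Y(\<rho> := y)) ` {y. poly (p Y) (int y) = 0})"
    proof (rule card_mono[OF _ sub])
      have "finite {y. poly (p Y) (int y) = 0}"
        by (rule finite_imageD[where f=int]) (auto intro: finite_subset[OF _ finr])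
      then show "finite ((\<lambda>y. Y(\<rho> := y)) ` {y. poly (p Y) (int y) = 0})" by simp
    qed
    also have "\<dots> \<le> card {y. poly (p Y) (int y) = 0}" by (rule card_image_le)
      (rule finite_imageD[where f=int]; auto intro: finite_subset[OF _ finr])
    also have "\<dots> \<le> card {x. poly (p Y) x = 0}"
      by (rule card_inj_on_le[where f=int]) (auto simp: finr)
    also have "\<dots> \<le> degree (p Y)" by (rule card_poly_roots_bound[OF pnz])
    also have "\<dots> \<le> e" by (rule degp)
    finally show ?thesis .
  qed
  have finT: "finite T" using fin by (simp add: T_def)
  have "Z2 \<subseteq> (\<Union>Y\<in>T. F Y)"
  proof
    fix X assume X: "X \<in> Z2"
    then have "X(\<rho> := 1) \<in> T" using down by (simp add: Z2_def T_def)
    moreover have "X \<in> F (X(\<rho> := 1))" using X by (simp add: Z2_def F_def)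
    ultimately show "X \<in> (\<Union>Y\<in>T. F Y)" by blast
  qed
  then have "card Z2 \<le> card (\<Union>Y\<in>T. F Y)"
    by (intro card_mono) (auto simp: F_def intro: finite_subset[OF _ fin] finT)
  also have "\<dots> \<le> (\<Sum>Y\<in>T. card (F Y))" by (rule card_UN_le[OF finT])
  also have "\<dots> \<le> (\<Sum>Y\<in>T. e)" by (intro sum_mono FY)
  also have "\<dots> = e * card T" by simp
  finally show ?thesis by (simp add: Z2_def T_def)
qed

lemma poly_count:
  fixes S :: "('r::finite \<Rightarrow> nat) set"
  assumes fin: "finite S" and down: "\<And>X \<rho>. X \<in> S \<Longrightarrow> X(\<rho> := 1) \<in> S"
  shows "is_mpoly \<phi> \<Longrightarrow> (\<exists>\<alpha>. \<phi> \<alpha> \<noteq> 0) \<Longrightarrow>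
    card {X\<in>S. mpoly_eval \<phi> X = 0} \<le> mpoly_degree \<phi> * (\<Sum>\<rho>\<in>UNIV. card {X\<in>S. X \<rho> = 1})"
proof (induction "mpoly_degree \<phi>" arbitrary: \<phi> rule: less_induct)
  case less
  define T where "T = (\<Sum>\<rho>\<in>UNIV. card {X\<in>S. X \<rho> = 1})"
  have mp: "is_mpoly \<phi>" using less.prems(1) .
  have finsupp: "finite (supp \<phi>)" using mp by (simp add: is_mpoly_def supp_def)
  have suppne: "supp \<phi> \<noteq> {}" using less.prems(2) by (auto simp: supp_def)
  show ?case
  proof (cases "mpoly_degree \<phi> = 0")
    case True
    have z: "\<alpha> = (\<lambda>_. 0)" if "\<phi> \<alpha> \<noteq> 0" for \<alpha>
    proof -
      have "(\<Sum>\<rho>\<in>UNIV. \<alpha> \<rho>) = 0" using deg_ge[OF mp that] True by simp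
      then show ?thesis by (auto simp: fun_eq_iff)
    qed
    then have nz: "\<phi> (\<lambda>_. 0) \<noteq> 0" using less.prems(2) by metis
    have "supp \<phi> \<subseteq> {\<lambda>_. 0}" using z by (auto simp: supp_def)
    then have "mpoly_eval \<phi> X = \<phi> (\<lambda>_. 0) * mon (\<lambda>_. 0) X" for X
      using eval_superset[of "{\<lambda>_. 0}" \<phi> X] by simp
    then have "mpoly_eval \<phi> X \<noteq> 0" for X using nz by (simp add: mon_def)
    then show ?thesis by simp
  next
    case False
    have "mpoly_degree \<phi> \<in> (\<lambda>\<alpha>. \<Sum>\<rho>\<in>UNIV. \<alpha> \<rho>) ` supp \<phi>"
      unfolding mpoly_degree_def supp_def[symmetric] using finsupp suppne by (intro Max_in) auto
    then obtain \<alpha>1 where a1: "\<alpha>1 \<in> supp \<phi>" and a1d: "(\<Sum>\<rho>\<in>UNIV. \<alpha>1 \<rho>) = mpoly_degree \<phi>" by auto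
    then obtain \<rho> where r: "\<alpha>1 \<rho> > 0" using False
      by (metis (mono_tags, lifting) neq0_conv sum.neutral)
    define e where "e = Max ((\<lambda>\<alpha>. \<alpha> \<rho>) ` supp \<phi>)"
    have e_ge: "\<alpha> \<rho> \<le> e" if "\<phi> \<alpha> \<noteq> 0" for \<alpha>
      unfolding e_def using finsupp that by (intro Max_ge) (auto simp: supp_def)
    have "e \<in> (\<lambda>\<alpha>. \<alpha> \<rho>) ` supp \<phi>" unfolding e_def using finsupp suppne by (intro Max_in) auto
    then obtain \<alpha>2 where a2: "\<alpha>2 \<in> supp \<phi>" and a2e: "\<alpha>2 \<rho> = e" by auto
    have e1: "e \<ge> 1" using e_ge[of \<alpha>1] a1 r by (auto simp: supp_def)
    have ed: "e \<le> mpoly_degree \<phi>"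
    proof -
      have "\<alpha>2 \<rho> \<le> (\<Sum>\<sigma>\<in>UNIV. \<alpha>2 \<sigma>)" by (rule member_le_sum) auto
      also have "\<dots> \<le> mpoly_degree \<phi>" using deg_ge[OF mp] a2 by (auto simp: supp_def)
      finally show ?thesis using a2e by simp
    qed
    define \<psi> where "\<psi> = slice \<phi> \<rho> e"
    have mpsi: "is_mpoly \<psi>" unfolding \<psi>_def by (rule slice_mpoly[OF mp])
    have psinz: "\<exists>\<beta>. \<psi> \<beta> \<noteq> 0"
    proof
      have "(\<alpha>2(\<rho> := 0))(\<rho> := e) = \<alpha>2" using a2e by auto
      then show "\<psi> (\<alpha>2(\<rho> := 0)) \<noteq> 0" using a2 by (simp add: \<psi>_def slice_def supp_def)
    qed
    have degpsi: "mpoly_degree \<psi> \<le> mpoly_degree \<phi> - e"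
    proof (rule deg_le[OF mpsi psinz])
      fix \<beta> assume b: "\<psi> \<beta> \<noteq> 0"
      then have b0: "\<beta> \<rho> = 0" and bnz: "\<phi> (\<beta>(\<rho> := e)) \<noteq> 0" by (auto simp: \<psi>_def slice_def split: if_splits)
      have "(\<Sum>\<sigma>\<in>UNIV. (\<beta>(\<rho> := e)) \<sigma>) \<le> mpoly_degree \<phi>" by (rule deg_ge[OF mp bnz])
      then show "(\<Sum>\<sigma>\<in>UNIV. \<beta> \<sigma>) \<le> mpoly_degree \<phi> - e" using sum_upd[of \<beta> \<rho> e] b0 by simp
    qed
    then have lt: "mpoly_degree \<psi> < mpoly_degree \<phi>" using e1 False by simp
    have IH: "card {X\<in>S. mpoly_eval \<psi> X = 0} \<le> mpoly_degree \<psi> * T"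
      unfolding T_def by (rule less.hyps[OF lt mpsi psinz])
    have Z2: "card {X\<in>S. mpoly_eval \<psi> X \<noteq> 0 \<and> mpoly_eval \<phi> X = 0} \<le> e * T"
    proof -
      have "card {X\<in>S. mpoly_eval \<psi> X \<noteq> 0 \<and> mpoly_eval \<phi> X = 0} \<le> e * card {X\<in>S. X \<rho> = 1}"
        unfolding \<psi>_def by (rule fiber_bound[OF fin down mp e_ge])
      also have "card {X\<in>S. X \<rho> = 1} \<le> T"
        unfolding T_def by (rule member_le_sum[where f="\<lambda>\<rho>. card {X\<in>S. X \<rho> = 1}"]) auto
      finally show ?thesis by simp
    qed
    have "{X\<in>S. mpoly_eval \<phi> X = 0} \<subseteq> {X\<in>S. mpoly_eval \<psi> X = 0} \<union> {X\<in>S. mpoly_eval \<psi> X \<noteq> 0 \<and> mpoly_eval \<phi> X = 0}"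
      by auto
    then have "card {X\<in>S. mpoly_eval \<phi> X = 0} \<le> card ({X\<in>S. mpoly_eval \<psi> X = 0} \<union> {X\<in>S. mpoly_eval \<psi> X \<noteq> 0 \<and> mpoly_eval \<phi> X = 0})"
      by (intro card_mono) (auto intro: finite_subset[OF _ fin])
    also have "\<dots> \<le> card {X\<in>S. mpoly_eval \<psi> X = 0} + card {X\<in>S. mpoly_eval \<psi> X \<noteq> 0 \<and> mpoly_eval \<phi> X = 0}"
      by (rule card_Un_le)
    also have "\<dots> \<le> mpoly_degree \<psi> * T + e * T" using IH Z2 by simp
    also have "\<dots> \<le> (mpoly_degree \<phi> - e) * T + e * T" using degpsi by (simp add: mult_right_mono)
    also have "\<dots> = mpoly_degree \<phi> * T" using ed by (simp add: diff_mult_distrib)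
    finally show ?thesis unfolding T_def .
  qed
qed


lemma ln2_ge: "ln (2::real) \<ge> 1/2"
proof -
  have "ln (1/2::real) \<le> 1/2 - 1" by (rule ln_le_minus_one) simp
  then show ?thesis by (simp add: ln_div)
qed

lemma pow2_le: assumes "(2::real)^S \<le> B" shows "S \<le> nat \<lfloor>log 2 B\<rfloor>"
proof -
  have B0: "B > 0" using assms by (smt (verit) zero_less_power)
  have "log 2 ((2::real)^S) \<le> log 2 B" by (subst log_le_cancel_iff) (use assms B0 in auto)
  then have "real S \<le> log 2 B" by (simp add: log_nat_power)
  then have "int S \<le> \<lfloor>log 2 B\<rfloor>" by (simp add: le_floor_iff)
  then show ?thesis by simp
qed

lemma L_facts:
  fixes B :: real assumes B: "B \<ge> exp 1"
  defines "L \<equiv> nat \<lfloor>log 2 B\<rfloor>"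
  shows "(2::real)^L \<le> B" and "real L + 1 \<le> 3 * ln B" and "ln B \<ge> 1"
proof -
  have B1: "B \<ge> 1" using B by (smt (verit) one_le_exp_iff)
  then have B0: "B > 0" by simp
  have lnB: "ln B \<ge> 1" using B B0 by (metis ln_exp ln_le_cancel_iff exp_gt_zero)
  then show "ln B \<ge> 1" .
  have lg: "log 2 B \<ge> 0" using B1 by simp
  have RL: "real L \<le> log 2 B" unfolding L_def using lg by linarith
  have "(2::real)^L = 2 powr real L" by (simp add: powr_realpow)
  also have "\<dots> \<le> 2 powr log 2 B" using RL by (intro powr_mono) auto
  also have "\<dots> = B" using B0 by simp
  finally show "(2::real)^L \<le> B" .
  have "log 2 B = ln B / ln 2" by (simp add: log_def)
  also have "\<dots> \<le> ln B / (1/2)" using ln2_ge lnB by (intro divide_left_mono) auto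
  finally show "real L + 1 \<le> 3 * ln B" using RL lnB by simp
qed

context fanctx
begin

definition Box :: "('r \<Rightarrow> nat) \<Rightarrow> ('r \<Rightarrow> nat) set" where
  "Box k = PiE UNIV (\<lambda>\<rho>. {2^k \<rho>..<2^Suc (k \<rho>)})"

lemma card_Box: "card (Box k) = 2^(sum k UNIV)"
  by (simp add: Box_def card_PiE power_sum)

lemma finite_Box: "finite (Box k)"
  by (simp add: Box_def finite_PiE)

lemma in_Box: assumes "\<forall>\<rho>. X \<rho> \<ge> 1" shows "X \<in> Box (\<lambda>\<rho>. floor_log (X \<rho>))"
proof -
  have "X \<rho> \<in> {2^floor_log (X \<rho>)..<2^Suc (floor_log (X \<rho>))}" for \<rho>
  proof -
    have "X \<rho> > 0" using assms by (metis not_one_le_zero neq0_conv)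
    then show ?thesis using floor_log_exp2_le[of "X \<rho>"] floor_log_exp2_gt[of "X \<rho>"] by simp
  qed
  then show ?thesis by (auto simp: Box_def PiE_iff)
qed

lemma in_K:
  assumes X: "X \<in> A_set gen Dmax B"
  shows "(\<lambda>\<rho>. floor_log (X \<rho>)) \<in> Kset (nat \<lfloor>log 2 B\<rfloor>)"
proof -
  define k where "k \<rho> = floor_log (X \<rho>)" for \<rho>
  have X1: "\<forall>\<rho>. X \<rho> \<ge> 1" and mx: "Max ((\<lambda>\<sigma>. monD0 gen \<sigma> X) ` Dmax) \<le> B"
    using X by (auto simp: A_set_def)
  have "(\<Sum>\<rho>\<in>UNIV. a_coef gen \<sigma> \<rho> * int (k \<rho>)) \<le> int (nat \<lfloor>log 2 B\<rfloor>)" if \<sigma>: "\<sigma> \<in> Dmax" for \<sigma>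
  proof -
    define S where "S = (\<Sum>\<rho>\<in>UNIV. k \<rho> * nat (a_coef gen \<sigma> \<rho>))"
    have "(2::real)^S = (\<Prod>\<rho>\<in>UNIV. (2^k \<rho>)^nat (a_coef gen \<sigma> \<rho>))"
      by (simp add: S_def power_sum power_mult)
    also have "\<dots> \<le> (\<Prod>\<rho>\<in>UNIV. real (X \<rho>)^nat (a_coef gen \<sigma> \<rho>))"
    proof (rule prod_mono, intro conjI)
      fix \<rho> :: 'r
      have "2^k \<rho> \<le> X \<rho>" unfolding k_def using X1 by (intro floor_log_exp2_le) (metis not_one_le_zero neq0_conv)
      then have "(2::real)^k \<rho> \<le> real (X \<rho>)" by (metis of_nat_le_iff of_nat_numeral of_nat_power)
      then show "((2::real)^k \<rho>)^nat (a_coef gen \<sigma> \<rho>) \<le> real (X \<rho>)^nat (a_coef gen \<sigma> \<rho>)"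
        by (intro power_mono) auto
    qed simp
    also have "\<dots> = monD0 gen \<sigma> X" by (simp add: monD0_def)
    also have "\<dots> \<le> Max ((\<lambda>\<sigma>. monD0 gen \<sigma> X) ` Dmax)" using finite_Dmax \<sigma> by (intro Max_ge) auto
    also have "\<dots> \<le> B" by (rule mx)
    finally have "S \<le> nat \<lfloor>log 2 B\<rfloor>" by (rule pow2_le)
    moreover have "(\<Sum>\<rho>\<in>UNIV. a_coef gen \<sigma> \<rho> * int (k \<rho>)) = int S"
      unfolding S_def using a_nonneg[OF \<sigma>] by (simp add: of_nat_sum mult.commute)
    ultimately show ?thesis by (metis of_nat_le_iff)
  qed
  then show ?thesis by (simp add: Kset_def k_def)
qed

lemma A_subset: "A_set gen Dmax B \<subseteq> (\<Union>k\<in>Kset (nat \<lfloor>log 2 B\<rfloor>). Box k)"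
proof
  fix X assume X: "X \<in> A_set gen Dmax B"
  then have "\<forall>\<rho>. X \<rho> \<ge> 1" by (simp add: A_set_def)
  then show "X \<in> (\<Union>k\<in>Kset (nat \<lfloor>log 2 B\<rfloor>). Box k)" using in_K[OF X] in_Box by blast
qed

lemma A_finite: "finite (A_set gen Dmax B)"
  by (rule finite_subset[OF A_subset]) (auto simp: Kset_finite finite_Box)

lemma N_le:
  "card {X \<in> A_set gen Dmax B. X \<rho>0 = 1} \<le> (\<Sum>k\<in>{k\<in>Kset (nat \<lfloor>log 2 B\<rfloor>). k \<rho>0 = 0}. 2^(sum k UNIV))"
proof -
  define K0 where "K0 = {k\<in>Kset (nat \<lfloor>log 2 B\<rfloor>). k \<rho>0 = 0}"
  have finK0: "finite K0" unfolding K0_def using K0_finite .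
  have "{X \<in> A_set gen Dmax B. X \<rho>0 = 1} \<subseteq> (\<Union>k\<in>K0. Box k)"
  proof
    fix X assume X: "X \<in> {X \<in> A_set gen Dmax B. X \<rho>0 = 1}"
    then have "\<forall>\<rho>. X \<rho> \<ge> 1" by (simp add: A_set_def)
    moreover have "(\<lambda>\<rho>. floor_log (X \<rho>)) \<in> K0" using in_K[of X B] X by (simp add: K0_def)
    ultimately show "X \<in> (\<Union>k\<in>K0. Box k)" using in_Box by blast
  qed
  then have "card {X \<in> A_set gen Dmax B. X \<rho>0 = 1} \<le> card (\<Union>k\<in>K0. Box k)"
    by (intro card_mono) (auto simp: finK0 finite_Box)
  also have "\<dots> \<le> (\<Sum>k\<in>K0. card (Box k))" by (rule card_UN_le[OF finK0])
  also have "\<dots> = (\<Sum>k\<in>K0. 2^(sum k UNIV))" by (simp add: card_Box)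
  finally show ?thesis unfolding K0_def .
qed

end


lemma lnpowr_bound:
  fixes B a \<epsilon> :: real
  assumes B: "B \<ge> 1" and a: "a > 0" and e: "\<epsilon> > 0"
  shows "ln B powr a \<le> (a / \<epsilon>) powr a * B powr \<epsilon>"
proof -
  have "ln B \<le> B powr (\<epsilon> / a) / (\<epsilon> / a)" using B a e by (intro ln_powr_bound) auto
  also have "\<dots> = (a / \<epsilon>) * B powr (\<epsilon> / a)" by (simp add: field_simps)
  finally have l: "ln B \<le> (a / \<epsilon>) * B powr (\<epsilon> / a)" .
  have "ln B powr a \<le> ((a / \<epsilon>) * B powr (\<epsilon> / a)) powr a"
    using l B a by (auto intro!: powr_mono2)
  also have "\<dots> = (a / \<epsilon>) powr a * (B powr (\<epsilon> / a)) powr a"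
    using a e B by (intro powr_mult)
  also have "(B powr (\<epsilon> / a)) powr a = B powr \<epsilon>" using a by (simp add: powr_powr)
  finally show ?thesis .
qed

context fanctx
begin

lemma Nbound:
  "\<exists>C B0. \<forall>B\<ge>B0. real (card {X \<in> A_set gen Dmax B. X \<rho>0 = 1})
      \<le> C * B * ln B powr (real CARD('r) - real CARD('n) - 2)"
proof -
  define r2 where "r2 = real CARD('r) - real CARD('n) - 2"
  obtain \<sigma>0 where \<sigma>0: "\<sigma>0 \<in> Dmax" and r0: "\<rho>0 \<notin> \<sigma>0" using exists_avoid by blast
  have B_basic: "(2::real)^nat \<lfloor>log 2 B\<rfloor> \<le> B" "real (nat \<lfloor>log 2 B\<rfloor>) + 1 \<le> 3 * ln B" "ln B \<ge> 1"
    if "B \<ge> exp 1" for B using L_facts[OF that] by auto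
  have NL: "real (card {X \<in> A_set gen Dmax B. X \<rho>0 = 1})
       \<le> real (\<Sum>k\<in>{k\<in>Kset (nat \<lfloor>log 2 B\<rfloor>). k \<rho>0 = 0}. (2::nat)^(sum k UNIV))" for B
    using N_le[of B \<rho>0] by linarith
  show ?thesis
  proof (cases "\<exists>\<rho>1. \<rho>1 \<notin> \<sigma>0 \<and> \<rho>1 \<noteq> \<rho>0 \<and> a_coef gen \<sigma>0 \<rho>1 \<noteq> 0")
    case True
    then obtain \<rho>1 where r1: "\<rho>1 \<notin> \<sigma>0" "\<rho>1 \<noteq> \<rho>0" and a1: "a_coef gen \<sigma>0 \<rho>1 \<noteq> 0" by blast
    define p where "p = card (UNIV - \<sigma>0 - {\<rho>0,\<rho>1})"
    obtain C where C: "\<And>L. real (\<Sum>k\<in>{k\<in>Kset L. k \<rho>0 = 0}. (2::nat)^(sum k UNIV)) \<le> C * 2^L * real (L+1)^p"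
      using main_sum[OF \<sigma>0 r0 r1 a1] unfolding p_def by blast
    have pr: "real p \<le> r2"
    proof -
      have "UNIV - \<sigma>0 - {\<rho>0,\<rho>1} = UNIV - (\<sigma>0 \<union> {\<rho>0,\<rho>1})" by auto
      then have "p = CARD('r) - card (\<sigma>0 \<union> {\<rho>0,\<rho>1})" unfolding p_def
        by (simp add: card_Diff_subset)
      moreover have "card (\<sigma>0 \<union> {\<rho>0,\<rho>1}) = card \<sigma>0 + 2"
        using r0 r1 by (subst card_Un_disjoint) auto
      moreover have "card (\<sigma>0 \<union> {\<rho>0,\<rho>1}) \<le> CARD('r)" by (rule card_mono) auto
      moreover have "CARD('n) \<le> card \<sigma>0" by (rule card_ge[OF \<sigma>0])
      ultimately show ?thesis unfolding r2_def by linarith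
    qed
    define C' where "C' = max C 0 * 3^p"
    have "real (card {X \<in> A_set gen Dmax B. X \<rho>0 = 1}) \<le> C' * B * ln B powr r2" if B: "B \<ge> exp 1" for B
    proof -
      define L where "L = nat \<lfloor>log 2 B\<rfloor>"
      have lnB: "ln B \<ge> 1" using B_basic(3)[OF B] .
      have "real (card {X \<in> A_set gen Dmax B. X \<rho>0 = 1}) \<le> C * 2^L * real (L+1)^p"
        using NL[of B] C[of L] unfolding L_def by linarith
      also have "\<dots> \<le> max C 0 * 2^L * real (L+1)^p" by (intro mult_right_mono) auto
      also have "\<dots> \<le> max C 0 * B * (3 * ln B)^p"
      proof (rule mult_mono)
        show "max C 0 * 2 ^ L \<le> max C 0 * B" using B_basic(1)[OF B] unfolding L_def by (intro mult_left_mono) auto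
        show "real (L + 1) ^ p \<le> (3 * ln B) ^ p" using B_basic(2)[OF B] unfolding L_def by (intro power_mono) auto
      qed (use lnB less_le_trans[OF exp_gt_zero B] in auto)
      also have "(3 * ln B)^p = 3^p * ln B powr real p" using lnB by (simp add: power_mult_distrib powr_realpow)
      also have "ln B powr real p \<le> ln B powr r2" using pr lnB by (intro powr_mono) auto
      then have "max C 0 * B * (3^p * ln B powr real p) \<le> max C 0 * B * (3^p * ln B powr r2)"
        using less_le_trans[OF exp_gt_zero B] by (intro mult_left_mono) auto
      finally show ?thesis by (simp add: C'_def mult_ac)
    qed
    then show ?thesis unfolding r2_def by blast
  next
    case False
    then have deg: "\<And>\<rho>. \<rho> \<notin> \<sigma>0 \<Longrightarrow> \<rho> \<noteq> \<rho>0 \<Longrightarrow> a_coef gen \<sigma>0 \<rho> = 0" by blast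
    obtain \<theta> where th: "0 \<le> \<theta>" "\<theta> < 1"
      and thb: "\<And>L k. k \<in> {k\<in>Kset L. k \<rho>0 = 0} \<Longrightarrow> real (sum k UNIV) \<le> \<theta> * real L"
      using degen_bound[OF \<sigma>0 r0 deg] by blast
    define R where "R = CARD('r)"
    define a where "a = real R - r2"
    have a0: "a > 0" unfolding a_def r2_def R_def by simp
    define \<epsilon> where "\<epsilon> = 1 - \<theta>"
    have e0: "\<epsilon> > 0" using th by (simp add: \<epsilon>_def)
    define C' where "C' = 3^R * (a / \<epsilon>) powr a"
    have "real (card {X \<in> A_set gen Dmax B. X \<rho>0 = 1}) \<le> C' * B * ln B powr r2" if B: "B \<ge> exp 1" for B
    proof -
      define L where "L = nat \<lfloor>log 2 B\<rfloor>"
      define K0 where "K0 = {k\<in>Kset L. k \<rho>0 = 0}"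
      have lnB: "ln B \<ge> 1" using B_basic(3)[OF B] .
      have B1: "B \<ge> 1" using B by (smt (verit) one_le_exp_iff)
      have cardK0: "card K0 \<le> (L+1)^R"
      proof -
        have "K0 \<subseteq> PiE UNIV (\<lambda>_. {0..L})" using Kset_le by (auto simp: K0_def)
        then have "card K0 \<le> card (PiE (UNIV::'r set) (\<lambda>_. {0..L}))" by (intro card_mono) (auto intro: finite_PiE)
        also have "\<dots> = (L+1)^R" by (simp add: card_PiE R_def)
        finally show ?thesis .
      qed
      have "real (\<Sum>k\<in>K0. (2::nat)^(sum k UNIV)) = (\<Sum>k\<in>K0. (2::real)^(sum k UNIV))"
        by simp
      also have "\<dots> = (\<Sum>k\<in>K0. 2 powr real (sum k UNIV))"
        by (intro sum.cong refl) (rule powr_realpow[symmetric]; simp)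
      also have "\<dots> \<le> (\<Sum>k\<in>K0. 2 powr (\<theta> * real L))"
      proof (rule sum_mono)
        fix k assume k: "k \<in> K0"
        have "real (sum k UNIV) \<le> \<theta> * real L" using thb[of k L] k unfolding K0_def by blast
        then show "2 powr real (sum k UNIV) \<le> 2 powr (\<theta> * real L)" by (intro powr_mono) auto
      qed
      also have "\<dots> = real (card K0) * 2 powr (\<theta> * real L)" by simp
      also have "\<dots> \<le> real ((L+1)^R) * B powr \<theta>"
      proof (rule mult_mono)
        show "real (card K0) \<le> real ((L+1)^R)" using cardK0 by linarith
        have "2 powr (\<theta> * real L) = (2 powr real L) powr \<theta>" by (simp add: powr_powr mult.commute)
        also have "\<dots> \<le> B powr \<theta>" using B_basic(1)[OF B] th by (intro powr_mono2) (auto simp: L_def powr_realpow)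
        finally show "2 powr (\<theta> * real L) \<le> B powr \<theta>" .
      qed auto
      also have "real ((L+1)^R) \<le> (3 * ln B)^R"
        using B_basic(2)[OF B] unfolding L_def by (simp only: of_nat_power) (intro power_mono; auto)
      then have "real ((L+1)^R) * B powr \<theta> \<le> (3 * ln B)^R * B powr \<theta>" by (intro mult_right_mono) auto
      also have "(3 * ln B)^R = 3^R * (ln B powr r2 * ln B powr a)"
        using lnB by (simp add: power_mult_distrib powr_realpow[symmetric] powr_add[symmetric] a_def)
      also have "3^R * (ln B powr r2 * ln B powr a) * B powr \<theta> \<le> 3^R * (ln B powr r2 * ((a / \<epsilon>) powr a * B powr \<epsilon>)) * B powr \<theta>"
        using lnpowr_bound[OF B1 a0 e0] lnB by (intro mult_right_mono mult_left_mono) auto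
      also have "\<dots> = C' * (B powr \<epsilon> * B powr \<theta>) * ln B powr r2" by (simp add: C'_def mult_ac)
      also have "B powr \<epsilon> * B powr \<theta> = B" using B1 by (simp add: powr_add[symmetric] \<epsilon>_def)
      finally have "real (\<Sum>k\<in>K0. (2::nat)^(sum k UNIV)) \<le> C' * B * ln B powr r2" .
      then show ?thesis using NL[of B] unfolding K0_def L_def by linarith
    qed
    then show ?thesis unfolding r2_def by blast
  qed
qed

end


context fanctx
begin

lemma A_down: assumes X: "X \<in> A_set gen Dmax B" shows "X(\<rho> := 1) \<in> A_set gen Dmax B"
proof -
  have X1: "\<forall>\<rho>. X \<rho> \<ge> 1" and mx: "Max ((\<lambda>\<sigma>. monD0 gen \<sigma> X) ` Dmax) \<le> B"
    using X by (auto simp: A_set_def)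
  have fin: "finite ((\<lambda>\<sigma>. monD0 gen \<sigma> X) ` Dmax)" using finite_Dmax by simp
  have le: "monD0 gen \<sigma> (X(\<rho> := 1)) \<le> B" if \<sigma>: "\<sigma> \<in> Dmax" for \<sigma>
  proof -
    have "monD0 gen \<sigma> (X(\<rho> := 1)) \<le> monD0 gen \<sigma> X"
      unfolding monD0_def
    proof (rule prod_mono, intro conjI)
      fix \<tau>
      show "0 \<le> real ((X(\<rho> := 1)) \<tau>) ^ nat (a_coef gen \<sigma> \<tau>)" by simp
      have "real ((X(\<rho> := 1)) \<tau>) \<le> real (X \<tau>)" using X1 by (cases "\<tau> = \<rho>") auto
      then show "real ((X(\<rho> := 1)) \<tau>) ^ nat (a_coef gen \<sigma> \<tau>) \<le> real (X \<tau>) ^ nat (a_coef gen \<sigma> \<tau>)"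
        by (intro power_mono) auto
    qed
    also have "\<dots> \<le> Max ((\<lambda>\<sigma>. monD0 gen \<sigma> X) ` Dmax)" using fin \<sigma> by (intro Max_ge) auto
    finally show ?thesis using mx by simp
  qed
  have "Max ((\<lambda>\<sigma>. monD0 gen \<sigma> (X(\<rho> := 1))) ` Dmax) \<le> B"
    using finite_Dmax Dmax_ne le by (subst Max_le_iff) auto
  moreover have "\<forall>\<tau>. (X(\<rho> := 1)) \<tau> \<ge> 1" using X1 by simp
  ultimately show ?thesis by (simp add: A_set_def)
qed

end

theorem proposition7p1:
  fixes gen :: "'r::finite \<Rightarrow> int ^ 'n::finite"
    and Dmax :: "'r set set"
  assumes "complete_regular_fan gen Dmax"
    and "projective_fan gen Dmax"
    and "anticanonical_gg gen Dmax"
  defines "r \<equiv> real CARD('r) - real CARD('n)"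
  shows "\<exists>C B0. \<forall>(\<phi> :: ('r \<Rightarrow> nat) \<Rightarrow> int) B. is_mpoly \<phi> \<and> (\<exists>\<alpha>. \<phi> \<alpha> \<noteq> 0) \<and> B \<ge> B0 \<longrightarrow>
     real (card (A_phi gen Dmax \<phi> B))
       \<le> C * (B * ln B powr (r - 2) * ln (ln B) + real (mpoly_degree \<phi>) * B * ln B powr (r - 2))"
proof -
  interpret fanctx gen Dmax using assms(1) assms(3) by unfold_locales
  have r2: "r - 2 = real CARD('r) - real CARD('n) - 2" unfolding r_def by simp
  have ex: "\<forall>\<rho>. \<exists>p::real\<times>real. \<forall>B\<ge>snd p. real (card {X \<in> A_set gen Dmax B. X \<rho> = 1}) \<le> fst p * B * ln B powr (r - 2)"
  proof
    fix \<rho>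
    obtain C B0 where "\<forall>B\<ge>B0. real (card {X \<in> A_set gen Dmax B. X \<rho> = 1}) \<le> C * B * ln B powr (r - 2)"
      using Nbound[of \<rho>] unfolding r2 by blast
    then show "\<exists>p::real\<times>real. \<forall>B\<ge>snd p. real (card {X \<in> A_set gen Dmax B. X \<rho> = 1}) \<le> fst p * B * ln B powr (r - 2)"
      by (intro exI[of _ "(C, B0)"]) simp
  qed
  obtain F where F: "\<forall>\<rho>. \<forall>B\<ge>snd (F \<rho>). real (card {X \<in> A_set gen Dmax B. X \<rho> = 1}) \<le> fst (F \<rho>) * B * ln B powr (r - 2)"
    using choice[OF ex] by blast
  define Cf where "Cf \<rho> = fst (F \<rho>)" for \<rho>
  define B0f where "B0f \<rho> = snd (F \<rho>)" for \<rho>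
  have CB: "\<And>\<rho> B. B \<ge> B0f \<rho> \<Longrightarrow> real (card {X \<in> A_set gen Dmax B. X \<rho> = 1}) \<le> Cf \<rho> * B * ln B powr (r - 2)"
    using F unfolding Cf_def B0f_def by blast
  define C where "C = (\<Sum>\<rho>\<in>UNIV. \<bar>Cf \<rho>\<bar>)"
  have C0: "C \<ge> 0" unfolding C_def by (simp add: sum_nonneg)
  define B0 where "B0 = max (exp (exp 1)) (Max (range B0f))"
  have "real (card (A_phi gen Dmax \<phi> B))
       \<le> C * (B * ln B powr (r - 2) * ln (ln B) + real (mpoly_degree \<phi>) * B * ln B powr (r - 2))"
    if \<phi>: "is_mpoly \<phi>" "\<exists>\<alpha>. \<phi> \<alpha> \<noteq> 0" and B: "B \<ge> B0" for \<phi> B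
  proof -
    have Be: "B \<ge> exp (exp 1)" using B by (simp add: B0_def)
    have Bf: "B \<ge> B0f \<rho>" for \<rho>
    proof -
      have "B0f \<rho> \<le> Max (range B0f)" by (intro Max_ge) auto
      then show ?thesis using B by (simp add: B0_def)
    qed
    have Bpos: "B > 0" using Be less_le_trans[OF exp_gt_zero] by blast
    have lnB: "ln B \<ge> exp 1" using Be Bpos by (metis exp_gt_zero ln_exp ln_le_cancel_iff)
    have "exp 1 \<ge> (1::real)" by simp
    then have lnlnB: "ln (ln B) \<ge> 0" using lnB by (intro ln_ge_zero) linarith
    define P where "P = B * ln B powr (r - 2)"
    have P0: "P \<ge> 0" unfolding P_def using Bpos by simp
    have "card (A_phi gen Dmax \<phi> B) \<le> mpoly_degree \<phi> * (\<Sum>\<rho>\<in>UNIV. card {X \<in> A_set gen Dmax B. X \<rho> = 1})"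
      unfolding A_phi_def by (rule poly_count[OF A_finite A_down \<phi>])
    then have "real (card (A_phi gen Dmax \<phi> B)) \<le> real (mpoly_degree \<phi> * (\<Sum>\<rho>\<in>UNIV. card {X \<in> A_set gen Dmax B. X \<rho> = 1}))"
      by (simp only: of_nat_le_iff)
    also have "\<dots> = real (mpoly_degree \<phi>) * (\<Sum>\<rho>\<in>UNIV. real (card {X \<in> A_set gen Dmax B. X \<rho> = 1}))"
      by (simp add: of_nat_sum)
    also have "\<dots> \<le> real (mpoly_degree \<phi>) * (\<Sum>\<rho>\<in>UNIV. \<bar>Cf \<rho>\<bar> * P)"
    proof (intro mult_left_mono sum_mono)
      fix \<rho> :: 'r
      have "real (card {X \<in> A_set gen Dmax B. X \<rho> = 1}) \<le> Cf \<rho> * P" using CB[OF Bf] by (simp add: P_def mult.assoc)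
      also have "\<dots> \<le> \<bar>Cf \<rho>\<bar> * P" using P0 by (intro mult_right_mono) auto
      finally show "real (card {X \<in> A_set gen Dmax B. X \<rho> = 1}) \<le> \<bar>Cf \<rho>\<bar> * P" .
    qed simp
    also have "\<dots> = C * (real (mpoly_degree \<phi>) * P)" by (simp add: C_def sum_distrib_right sum_distrib_left mult_ac)
    also have "\<dots> \<le> C * (P * ln (ln B) + real (mpoly_degree \<phi>) * P)"
      using C0 P0 lnlnB by (intro mult_left_mono) auto
    finally show ?thesis by (simp add: P_def mult.assoc)
  qed
  then show ?thesis by blast
qed


end
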